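(* Let $\lambda$ be a partition with at most $n$ parts, $\mu\in S_n(\lambda)$ and $1\le i\le n-1$. Then (1) $T_if^*_\mu=f^*_{s_i\mu}$ if $\mu_i>\mu_{i+1}$; (2) $T_if^*_\mu=tf^*_\mu$ if $\mu_i=\mu_{i+1}$; (3) $T_if^*_\mu=(t-1)f^*_\mu+tf^*_{s_i\mu}$ if $\mu_i<\mu_{i+1}$.
   Context: Polynomials are in $x_1,\dots,x_n$ over $\mathbb{Q}(q,t)$. For $\mu\in\mathbb{N}^n$ let $k_i(\mu)=\#\{j<i:\mu_j>\mu_i\}+\#\{j>i:\mu_j\ge\mu_i\}$ and $\widetilde\mu=(q^{\mu_1}t^{-k_1(\mu)},\dots,q^{\mu_n}t^{-k_n(\mu)})$. For $\mu\in\mathbb{N}^n$, $|\mu|=d$, $E^*_\mu$ is the unique polynomial of degree at most $d$ with coefficient of $x^\mu$ equal to $1$ and $E^*_\mu(\widetilde\nu)=0$ for all $\nu\in\mathbb{N}^n$, $|\nu|\le d$, $\nu\ne\mu$. $S_n$ acts on compositions by $\sigma\cdot\mu=(\mu_{\sigma^{-1}(1)},\dots,\mu_{\sigma^{-1}(n)})$ and on polynomials by permuting variables; $s_i=(i,i+1)$; $T_i=t-\frac{tx_i-x_{i+1}}{x_i-x_{i+1}}(1-s_i)$; $T_\sigma=T_{i_1}\cdots T_{i_\ell}$ for a reduced word $\sigma=s_{i_1}\cdots s_{i_\ell}$. $S_n(\lambda)$ is the set of rearrangements of $\lambda$; for $\mu\in S_n(\lambda)$, $\sigma_\mu$ is the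 shortest permutation with $\sigma_\mu(\lambda)=\mu$, and the interpolation ASEP polynomial is $f^*_\mu=T_{\sigma_\mu}E^*_\lambda$. *)

theory Defs
  imports Main "HOL-Library.Poly_Mapping" "HOL-Computational_Algebra.Polynomial"
    "HOL-Computational_Algebra.Fraction_Field" "HOL-Combinatorics.Transposition" "HOL-Combinatorics.Permutations"
begin

text \<open>The coefficient field Q(q,t): fractions of bivariate rational polynomials.
  The inner polynomial variable is q, the outer one is t.\<close>
type_synonym K = "rat poly poly fract"

definition qq :: K where "qq = Fract [:[:0, 1:]:] 1"
definition tt :: K where "tt = Fract [:0, 1:] 1"

text \<open>Multivariate polynomials in x_0, x_1, ... (variables indexed from 0;
  the paper's x_i is our x_(i-1)).\<close>
type_synonym mpoly = "(nat \<Rightarrow>\<^sub>0 nat) \<Rightarrow>\<^sub>0 K"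

definition mvar :: "nat \<Rightarrow> mpoly" where
  "mvar i = Poly_Mapping.single (Poly_Mapping.single i 1) 1"

definition mconst :: "K \<Rightarrow> mpoly" where
  "mconst c = Poly_Mapping.single 0 c"

definition mon :: "nat list \<Rightarrow> (nat \<Rightarrow>\<^sub>0 nat)" where
  "mon mu = Poly_Mapping.nth mu"

definition mcoeff :: "mpoly \<Rightarrow> nat list \<Rightarrow> K" where
  "mcoeff p mu = Poly_Mapping.lookup p (mon mu)"

definition tdeg :: "(nat \<Rightarrow>\<^sub>0 nat) \<Rightarrow> nat" where
  "tdeg m = (\<Sum>j\<in>Poly_Mapping.keys m. Poly_Mapping.lookup m j)"

definition in_vars_deg :: "nat \<Rightarrow> nat \<Rightarrow> mpoly \<Rightarrow> bool" where
  "in_vars_deg n d p \<longleftrightarrow> (\<forall>m\<in>Poly_Mapping.keys p. Poly_Mapping.keys m \<subseteq> {..<n} \<and> tdeg m \<le> d)"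

definition meval :: "mpoly \<Rightarrow> (nat \<Rightarrow> K) \<Rightarrow> K" where
  "meval p a = (\<Sum>m\<in>Poly_Mapping.keys p. Poly_Mapping.lookup p m * (\<Prod>j\<in>Poly_Mapping.keys m. a j ^ Poly_Mapping.lookup m j))"

definition kk :: "nat list \<Rightarrow> nat \<Rightarrow> nat" where
  "kk mu i = card {j. j < i \<and> mu ! j > mu ! i} + card {j. i < j \<and> j < length mu \<and> mu ! j \<ge> mu ! i}"

definition tilde :: "nat list \<Rightarrow> nat \<Rightarrow> K" where
  "tilde mu i = (if i < length mu then qq ^ (mu ! i) * inverse tt ^ kk mu i else 0)"

definition Estar :: "nat list \<Rightarrow> mpoly" where
  "Estar mu = (THE p. in_vars_deg (length mu) (sum_list mu) p \<and> mcoeff p mu = 1 \<and>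
     (\<forall>nu. length nu = length mu \<and> sum_list nu \<le> sum_list mu \<and> nu \<noteq> mu
        \<longrightarrow> meval p (tilde nu) = 0))"

definition swapc :: "nat \<Rightarrow> nat list \<Rightarrow> nat list" where
  "swapc i mu = mu[i := mu ! Suc i, Suc i := mu ! i]"

definition swapp :: "nat \<Rightarrow> mpoly \<Rightarrow> mpoly" where
  "swapp i p = Poly_Mapping.map_key (Poly_Mapping.map_key (transpose i (Suc i))) p"

text \<open>Demazure-Lusztig operator
  T_i f = t f - (t x_i - x_(i+1)) / (x_i - x_(i+1)) * (f - s_i f),
  i.e. the unique polynomial g with (x_i - x_(i+1)) g equal to
  (x_i - x_(i+1)) t f - (t x_i - x_(i+1)) (f - s_i f).\<close>
definition Top :: "nat \<Rightarrow> mpoly \<Rightarrow> mpoly" where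
  "Top i f = (THE g. (mvar i - mvar (Suc i)) * g =
      (mvar i - mvar (Suc i)) * (mconst tt * f)
      - (mconst tt * mvar i - mvar (Suc i)) * (f - swapp i f))"

definition actc :: "(nat \<Rightarrow> nat) \<Rightarrow> nat list \<Rightarrow> nat list" where
  "actc \<sigma> mu = map (\<lambda>j. mu ! inv \<sigma> j) [0..<length mu]"

definition perm_len :: "nat \<Rightarrow> (nat \<Rightarrow> nat) \<Rightarrow> nat" where
  "perm_len n \<sigma> = card {(a, b). a < b \<and> b < n \<and> \<sigma> a > \<sigma> b}"

definition word_perm :: "nat list \<Rightarrow> (nat \<Rightarrow> nat)" where
  "word_perm w = foldr (\<lambda>i \<sigma>. transpose i (Suc i) \<circ> \<sigma>) w id"

definition reduced_word :: "nat \<Rightarrow> (nat \<Rightarrow> nat) \<Rightarrow> nat list \<Rightarrow> bool" where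
  "reduced_word n \<sigma> w \<longleftrightarrow> (\<forall>i\<in>set w. Suc i < n) \<and> word_perm w = \<sigma> \<and> length w = perm_len n \<sigma>"

definition Tperm :: "nat \<Rightarrow> (nat \<Rightarrow> nat) \<Rightarrow> mpoly \<Rightarrow> mpoly" where
  "Tperm n \<sigma> f = foldr Top (SOME w. reduced_word n \<sigma> w) f"

definition sigma_of :: "nat list \<Rightarrow> nat list \<Rightarrow> (nat \<Rightarrow> nat)" where
  "sigma_of lam mu = arg_min (perm_len (length lam)) (\<lambda>\<sigma>. \<sigma> permutes {..<length lam} \<and> actc \<sigma> lam = mu)"

definition fstar :: "nat list \<Rightarrow> nat list \<Rightarrow> mpoly" where
  "fstar lam mu = Tperm (length lam) (sigma_of lam mu) (Estar lam)"

end

theory Submission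
  imports Defs
begin

abbreviation lk :: "('a \<Rightarrow>\<^sub>0 'b::zero) \<Rightarrow> 'a \<Rightarrow> 'b" where "lk \<equiv> poly_mapping.lookup"
abbreviation ks :: "('a \<Rightarrow>\<^sub>0 'b::zero) \<Rightarrow> 'a set" where "ks \<equiv> Poly_Mapping.keys"
abbreviation sg :: "'a \<Rightarrow> 'b \<Rightarrow> ('a \<Rightarrow>\<^sub>0 'b::zero)" where "sg \<equiv> Poly_Mapping.single"

lemma pm_expand: "(p::'a \<Rightarrow>\<^sub>0 'b::comm_monoid_add) = (\<Sum>m\<in>ks p. sg m (lk p m))"
proof (rule poly_mapping_eqI)
  fix k
  have "lk (\<Sum>m\<in>ks p. sg m (lk p m)) k = (\<Sum>m\<in>ks p. (lk p m when m = k))"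
    by (simp add: lookup_sum lookup_single)
  also have "\<dots> = lk p k"
  proof (cases "k \<in> ks p")
    case True
    then show ?thesis
      by (simp add: when_def sum.delta)
  next
    case False
    then show ?thesis
      by (auto simp: when_def in_keys_iff intro!: sum.neutral)
  qed
  finally show "lk p k = lk (\<Sum>m\<in>ks p. sg m (lk p m)) k" by simp
qed

lemma lookup_sum_single:
  assumes "finite A" "inj_on f A"
  shows "lk (\<Sum>a\<in>A. sg (f a) (c a)) k = (if k \<in> f ` A then c (the_inv_into A f k) else 0)"
proof -
  have "lk (\<Sum>a\<in>A. sg (f a) (c a)) k = (\<Sum>a\<in>A. if f a = k then c a else 0)"
    by (simp add: lookup_sum lookup_single when_def)
  also have "\<dots> = (if k \<in> f ` A then c (the_inv_into A f k) else 0)"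
  proof (cases "k \<in> f ` A")
    case True
    then obtain a0 where a0: "a0 \<in> A" "k = f a0" by auto
    have "(\<Sum>a\<in>A. if f a = k then c a else 0) = (\<Sum>a\<in>A. if a = a0 then c a else 0)"
      using assms(2) a0 by (intro sum.cong) (auto simp: inj_on_def)
    also have "\<dots> = c a0" using a0 assms(1) by (simp add: sum.delta')
    finally show ?thesis using True a0 assms(2) by (simp add: the_inv_into_f_f)
  next
    case False
    then show ?thesis by (auto intro!: sum.neutral)
  qed
  finally show ?thesis .
qed

definition mono_eval :: "(nat \<Rightarrow>\<^sub>0 nat) \<Rightarrow> (nat \<Rightarrow> K) \<Rightarrow> K" where
  "mono_eval m z = (\<Prod>j\<in>ks m. z j ^ lk m j)"

lemma mono_eval_superset:
  assumes "finite U" "ks m \<subseteq> U"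
  shows "mono_eval m z = (\<Prod>j\<in>U. z j ^ lk m j)"
  unfolding mono_eval_def
  using assms by (intro prod.mono_neutral_left) (auto simp: in_keys_iff)

lemma keys_add_nat: "ks ((a::nat \<Rightarrow>\<^sub>0 nat) + b) = ks a \<union> ks b"
  by (auto simp: in_keys_iff lookup_add)

lemma mono_eval_add: "mono_eval (a + b) z = mono_eval a z * mono_eval b z"
proof -
  let ?U = "ks a \<union> ks b"
  have "mono_eval (a + b) z = (\<Prod>j\<in>?U. z j ^ lk (a+b) j)"
    by (rule mono_eval_superset) (auto simp: keys_add_nat)
  also have "\<dots> = (\<Prod>j\<in>?U. z j ^ lk a j) * (\<Prod>j\<in>?U. z j ^ lk b j)"
    by (simp add: lookup_add power_add prod.distrib)
  also have "\<dots> = mono_eval a z * mono_eval b z"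
    by (subst (1 2) mono_eval_superset[of ?U]) auto
  finally show ?thesis .
qed

lemma mono_eval_zero [simp]: "mono_eval 0 z = 1"
  by (simp add: mono_eval_def)

lemma mono_eval_single: "mono_eval (sg j k) z = z j ^ k"
  by (simp add: mono_eval_def)

lemma meval_zero [simp]: "meval 0 z = 0"
  by (simp add: meval_def)

lemma meval_alt: "meval p z = (\<Sum>m\<in>ks p. lk p m * mono_eval m z)"
  by (simp add: meval_def mono_eval_def)

lemma meval_add: "meval (p + q) z = meval p z + meval q z"
  unfolding meval_alt
  by (rule setsum_keys_plus_distrib) (auto simp: algebra_simps)

lemma meval_single: "meval (sg m c) z = c * mono_eval m z"
  by (simp add: meval_alt)

lemma meval_sum: "meval (sum f A) z = (\<Sum>a\<in>A. meval (f a) z)"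
  by (induction A rule: infinite_finite_induct) (auto simp: meval_add)

lemma meval_uminus: "meval (- p) z = - meval p z"
  by (simp add: meval_alt sum_negf keys_minus)

lemma meval_diff: "meval (p - q) z = meval p z - meval q z"
  using meval_add[of p "-q" z] by (simp add: meval_uminus)

lemma meval_mult: "meval (p * q) z = meval p z * meval q z"
proof -
  have "p * q = (\<Sum>m\<in>ks p. sg m (lk p m)) * (\<Sum>m'\<in>ks q. sg m' (lk q m'))"
    by (subst (1) pm_expand, subst (2) pm_expand) simp
  also have "\<dots> = (\<Sum>m\<in>ks p. \<Sum>m'\<in>ks q. sg (m + m') (lk p m * lk q m'))"
    by (simp add: sum_distrib_left sum_distrib_right mult_single sum.swap[of _ "ks q"])
  finally have "meval (p * q) z = (\<Sum>m\<in>ks p. \<Sum>m'\<in>ks q. lk p m * lk q m' * mono_eval (m + m') z)"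
    by (simp add: meval_sum meval_single)
  also have "\<dots> = (\<Sum>m\<in>ks p. lk p m * mono_eval m z) * (\<Sum>m'\<in>ks q. lk q m' * mono_eval m' z)"
    by (subst sum_product) (simp add: mono_eval_add algebra_simps)
  finally show ?thesis by (simp add: meval_alt)
qed

lemma meval_mvar [simp]: "meval (mvar i) z = z i"
  by (simp add: mvar_def meval_single mono_eval_single)

lemma meval_mconst [simp]: "meval (mconst c) z = c"
  by (simp add: mconst_def meval_single)

lemma meval_one [simp]: "meval 1 z = 1"
  using meval_mconst[of 1 z] by (simp add: mconst_def)

lemma meval_power: "meval (p ^ k) z = meval p z ^ k"
  by (induction k) (auto simp: meval_mult)

lemma meval_cong:
  assumes "\<And>m j. m \<in> ks p \<Longrightarrow> j \<in> ks m \<Longrightarrow> z j = z' j"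
  shows "meval p z = meval p z'"
  unfolding meval_def using assms by (intro sum.cong refl arg_cong2[where f="(*)"] prod.cong) auto

definition ivd :: "nat set \<Rightarrow> nat \<Rightarrow> mpoly \<Rightarrow> bool" where
  "ivd S d p \<longleftrightarrow> (\<forall>m\<in>ks p. ks m \<subseteq> S \<and> tdeg m \<le> d)"

lemma tdeg_add: "tdeg (a + b) = tdeg a + tdeg b"
  unfolding tdeg_def by (rule setsum_keys_plus_distrib) auto

lemma tdeg_zero [simp]: "tdeg 0 = 0"
  by (simp add: tdeg_def)

lemma tdeg_single [simp]: "tdeg (sg j k) = k"
  by (simp add: tdeg_def)

lemma ivd_zero [simp]: "ivd S d 0"
  by (simp add: ivd_def)

lemma ivd_mono: "ivd S d p \<Longrightarrow> d \<le> d' \<Longrightarrow> S \<subseteq> S' \<Longrightarrow> ivd S' d' p"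
  by (force simp: ivd_def)

lemma ivd_add: "ivd S d p \<Longrightarrow> ivd S d q \<Longrightarrow> ivd S d (p + q)"
  unfolding ivd_def using keys_add[of p q] by blast

lemma ivd_uminus: "ivd S d p \<Longrightarrow> ivd S d (- p)"
  by (simp add: ivd_def keys_minus)

lemma ivd_diff: "ivd S d p \<Longrightarrow> ivd S d q \<Longrightarrow> ivd S d (p - q)"
  using ivd_add[of S d p "-q"] ivd_uminus[of S d q] by simp

lemma ivd_sum: "(\<And>a. a \<in> A \<Longrightarrow> ivd S d (f a)) \<Longrightarrow> ivd S d (sum f A)"
  by (induction A rule: infinite_finite_induct) (auto intro: ivd_add)

lemma ivd_mult: "ivd S d1 p \<Longrightarrow> ivd S d2 q \<Longrightarrow> ivd S (d1 + d2) (p * q)"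
  unfolding ivd_def
proof
  fix m assume A: "\<forall>m\<in>ks p. ks m \<subseteq> S \<and> tdeg m \<le> d1" "\<forall>m\<in>ks q. ks m \<subseteq> S \<and> tdeg m \<le> d2"
    and m: "m \<in> ks (p * q)"
  then obtain a b where "m = a + b" "a \<in> ks p" "b \<in> ks q" using keys_mult[of p q] by blast
  then show "ks m \<subseteq> S \<and> tdeg m \<le> d1 + d2" using A by (auto simp: keys_add_nat tdeg_add add_mono)
qed

lemma ivd_single: "ks m \<subseteq> S \<Longrightarrow> tdeg m \<le> d \<Longrightarrow> ivd S d (sg m c)"
  by (simp add: ivd_def)

lemma ivd_mconst [simp]: "ivd S d (mconst c)"
  by (simp add: mconst_def ivd_def)

lemma ivd_mvar: "i \<in> S \<Longrightarrow> 1 \<le> d \<Longrightarrow> ivd S d (mvar i)"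
  by (simp add: mvar_def ivd_def)

lemma ivd_power: "ivd S d p \<Longrightarrow> ivd S (k * d) (p ^ k)"
proof (induction k)
  case 0 then show ?case using ivd_mconst[of S 0 1] by (simp add: mconst_def)
next
  case (Suc k) then show ?case using ivd_mult[of S d p "k*d" "p^k"] by simp
qed

lemma ivd_mult_const: "ivd S d p \<Longrightarrow> ivd S d (mconst c * p)"
  using ivd_mult[of S 0 "mconst c" d p] by simp

lemma single_mconst: "sg m c = mconst c * sg m 1"
  by (simp add: mconst_def mult_single)

lemma single_add_1: "sg (a + b) (1::K) = sg a 1 * sg b 1"
  by (simp add: mult_single)

lemma single_pow: "sg (sg j k) (1::K) = mvar j ^ k"
proof (induction k)
  case 0 then show ?case by simp
next
  case (Suc k)
  have "sg (sg j (Suc k)) (1::K) = sg (sg j 1 + sg j k) 1"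
    by (simp add: single_add[symmetric])
  then show ?case using Suc by (simp add: single_add_1 mvar_def)
qed

lemma mconst_power: "mconst c ^ k = mconst (c ^ k)"
  by (induction k) (auto simp: mconst_def mult_single)

lemma mconst_mult: "mconst a * mconst b = mconst (a * b)"
  by (simp add: mconst_def mult_single)

lemma mconst_add: "mconst a + mconst b = mconst (a + b)"
  by (simp add: mconst_def single_add)

lemma mconst_diff: "mconst a - mconst b = mconst (a - b)"
  by (simp add: mconst_def single_diff)

lemma mconst_one: "mconst 1 = 1"
  by (simp add: mconst_def)

lemma mconst_zero: "mconst 0 = 0"
  by (simp add: mconst_def)


definition G :: "'a::comm_ring_1 \<Rightarrow> 'a \<Rightarrow> nat \<Rightarrow> 'a" where
  "G X Y N = (\<Sum>p<N. X ^ p * Y ^ (N - 1 - p))"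

lemma geom: "X ^ N - Y ^ N = (X - Y) * G X Y N"
proof (cases N)
  case 0 then show ?thesis by (simp add: G_def)
next
  case (Suc M)
  then show ?thesis using diff_power_eq_sum[of X M Y] by (simp add: G_def)
qed

lemma ivd_G: "ivd S 1 X \<Longrightarrow> ivd S 1 Y \<Longrightarrow> ivd S (N - 1) (G X Y N)"
  unfolding G_def
proof (rule ivd_sum)
  fix p assume X: "ivd S 1 X" and Y: "ivd S 1 Y" and p: "p \<in> {..<N}"
  have "ivd S (p * 1 + (N - 1 - p) * 1) (X ^ p * Y ^ (N - 1 - p))"
    by (intro ivd_mult ivd_power X Y)
  then show "ivd S (N - 1) (X ^ p * Y ^ (N - 1 - p))"
    by (rule ivd_mono) (use p in auto)
qed

lemma G_0 [simp]: "G X Y 0 = 0"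
  by (simp add: G_def)

definition Qd :: "'a::comm_ring_1 \<Rightarrow> 'a \<Rightarrow> nat \<Rightarrow> nat \<Rightarrow> 'a" where
  "Qd X Y a b = (if b \<le> a then (X * Y) ^ b * G X Y (a - b) else - ((X * Y) ^ a * G X Y (b - a)))"

lemma Qd: "X ^ a * Y ^ b - X ^ b * Y ^ a = (X - Y) * Qd X Y a b"
proof (cases "b \<le> a")
  case True
  then obtain N where a: "a = b + N" using le_Suc_ex by blast
  have "X ^ a * Y ^ b - X ^ b * Y ^ a = (X * Y) ^ b * (X ^ N - Y ^ N)"
    unfolding a by (simp add: power_add power_mult_distrib algebra_simps)
  then show ?thesis using True a by (simp add: Qd_def geom algebra_simps)
next
  case False
  then obtain N where b: "b = a + N" using le_Suc_ex[of a b] by auto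
  have "X ^ a * Y ^ b - X ^ b * Y ^ a = - ((X * Y) ^ a * (X ^ N - Y ^ N))"
    unfolding b by (simp add: power_add power_mult_distrib algebra_simps)
  then show ?thesis using False b by (simp add: Qd_def geom algebra_simps)
qed

lemma ivd_Qd:
  assumes "ivd S 1 X" "ivd S 1 Y"
  shows "ivd S (a + b - 1) (Qd X Y a b)"
proof (cases "a = b")
  case True then show ?thesis by (simp add: Qd_def)
next
  case False
  show ?thesis
  proof (cases "b \<le> a")
    case True
    have "ivd S (b * (1 + 1) + (a - b - 1)) ((X * Y) ^ b * G X Y (a - b))"
      by (intro ivd_mult ivd_power ivd_G assms)
    then show ?thesis using True False unfolding Qd_def by (auto elim!: ivd_mono)
  next
    case F2: False
    have "ivd S (a * (1 + 1) + (b - a - 1)) ((X * Y) ^ a * G X Y (b - a))"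
      by (intro ivd_mult ivd_power ivd_G assms)
    then show ?thesis using F2 False unfolding Qd_def by (auto intro!: ivd_uminus elim!: ivd_mono)
  qed
qed

lemma Qd_00 [simp]: "Qd X Y 0 0 = 0"
  by (simp add: Qd_def)

lemma mk_lookup: "inj f \<Longrightarrow> lk (Poly_Mapping.map_key f m) k = lk m (f k)"
  by (simp add: map_key.rep_eq)

lemma mk_mk:
  assumes "\<And>x. f (g x) = x" "\<And>x. g (f x) = x"
  shows "Poly_Mapping.map_key g (Poly_Mapping.map_key f m) = m"
proof -
  have i: "inj f" "inj g" using assms by (metis injI)+
  show ?thesis by (rule poly_mapping_eqI) (simp add: mk_lookup i assms)
qed

lemma inj_mk:
  assumes "\<And>x. f (g x) = x" "\<And>x. g (f x) = x"
  shows "inj (Poly_Mapping.map_key f :: ('a \<Rightarrow>\<^sub>0 'b::zero) \<Rightarrow> _)"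
  by (rule injI) (metis mk_mk[OF assms])

lemma keys_mk:
  assumes "\<And>x. f (g x) = x" "\<And>x. g (f x) = x"
  shows "ks (Poly_Mapping.map_key f m) = g ` ks m"
proof -
  have i: "inj f" using assms by (metis injI)
  have "f -` ks m = g ` ks m"
  proof (intro set_eqI iffI)
    fix x assume "x \<in> f -` ks m" then show "x \<in> g ` ks m" by (metis assms(2) image_eqI vimageE)
  next
    fix x assume "x \<in> g ` ks m" then show "x \<in> f -` ks m" using assms(1) by auto
  qed
  moreover have "ks (Poly_Mapping.map_key f m) = f -` ks m"
    by (auto simp: in_keys_iff mk_lookup i)
  ultimately show ?thesis by simp
qed

lemma mono_eval_mk:
  assumes "\<And>x. f (g x) = x" "\<And>x. g (f x) = x"
  shows "mono_eval (Poly_Mapping.map_key f m) z = mono_eval m (z \<circ> g)"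
proof -
  have i: "inj f" "inj g" using assms by (metis injI)+
  have "mono_eval (Poly_Mapping.map_key f m) z = (\<Prod>j\<in>g ` ks m. z j ^ lk m (f j))"
    by (simp add: mono_eval_def keys_mk[OF assms] mk_lookup i)
  also have "\<dots> = (\<Prod>k\<in>ks m. z (g k) ^ lk m k)"
    by (subst prod.reindex) (auto simp: inj_on_def i assms injD[OF i(2)])
  finally show ?thesis by (simp add: mono_eval_def)
qed

lemma tdeg_mk:
  assumes "\<And>x. f (g x) = x" "\<And>x. g (f x) = x"
  shows "tdeg (Poly_Mapping.map_key f m) = tdeg m"
proof -
  have i: "inj f" "inj g" using assms by (metis injI)+
  have "tdeg (Poly_Mapping.map_key f m) = (\<Sum>j\<in>g ` ks m. lk m (f j))"
    by (simp add: tdeg_def keys_mk[OF assms] mk_lookup i)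
  also have "\<dots> = (\<Sum>k\<in>ks m. lk m k)"
    by (subst sum.reindex) (auto simp: inj_on_def i assms injD[OF i(2)])
  finally show ?thesis by (simp add: tdeg_def)
qed

lemma mono_eval_mult_pt: "mono_eval m (\<lambda>k. a k * b k) = mono_eval m a * mono_eval m b"
  by (simp add: mono_eval_def power_mult_distrib prod.distrib)

lemma upd_decomp: "m = Poly_Mapping.update k 0 m + sg k (lk m k)"
  by (rule poly_mapping_eqI) (simp add: lookup_add lookup_update lookup_single when_def)

lemma keys_upd0: "ks (Poly_Mapping.update k 0 m) = ks m - {k}"
  by (simp add: keys_update)

lemma tdeg_upd0: "tdeg m = tdeg (Poly_Mapping.update k 0 m) + lk m k"
  by (subst (1) upd_decomp[of m k]) (simp add: tdeg_add)

lemma mono_eval_upd: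
  "mono_eval m (z(k := c)) = c ^ lk m k * mono_eval (Poly_Mapping.update k 0 m) z"
proof -
  have "mono_eval m (z(k := c)) = mono_eval (Poly_Mapping.update k 0 m) (z(k := c)) * (z(k:=c)) k ^ lk m k"
    by (subst (1) upd_decomp[of m k]) (simp add: mono_eval_add mono_eval_single)
  also have "mono_eval (Poly_Mapping.update k 0 m) (z(k := c)) = mono_eval (Poly_Mapping.update k 0 m) z"
    unfolding mono_eval_def by (rule prod.cong) (auto simp: keys_upd0)
  finally show ?thesis by (simp only: fun_upd_same mult.commute)
qed

abbreviation tau :: "nat \<Rightarrow> nat \<Rightarrow> nat" where "tau i \<equiv> transpose i (Suc i)"

abbreviation mkt :: "nat \<Rightarrow> (nat \<Rightarrow>\<^sub>0 nat) \<Rightarrow> (nat \<Rightarrow>\<^sub>0 nat)" where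
  "mkt i \<equiv> Poly_Mapping.map_key (tau i)"

lemma mkt_mkt [simp]: "mkt i (mkt i m) = m"
  by (rule mk_mk) simp_all

lemma inj_mkt: "inj (mkt i)"
  by (metis injI mkt_mkt)

lemma swapp_lookup: "lk (swapp i p) m = lk p (mkt i m)"
  by (simp add: swapp_def map_key.rep_eq inj_mkt)

lemma swapp_expand: "swapp i p = (\<Sum>m\<in>ks p. sg (mkt i m) (lk p m))"
proof (rule poly_mapping_eqI)
  fix k
  have inj: "inj_on (mkt i) (ks p)" using inj_mkt by (auto simp: inj_on_def inj_def)
  have "lk (\<Sum>m\<in>ks p. sg (mkt i m) (lk p m)) k = (if k \<in> mkt i ` ks p then lk p (the_inv_into (ks p) (mkt i) k) else 0)"
    by (rule lookup_sum_single) (simp_all add: inj)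
  also have "\<dots> = lk p (mkt i k)"
  proof (cases "k \<in> mkt i ` ks p")
    case True
    then obtain m where m: "m \<in> ks p" "k = mkt i m" by auto
    then show ?thesis using inj by (simp add: the_inv_into_f_f)
  next
    case False
    then have "mkt i k \<notin> ks p" by (metis image_eqI mkt_mkt)
    then show ?thesis using False by (simp add: in_keys_iff)
  qed
  finally show "lk (swapp i p) k = lk (\<Sum>m\<in>ks p. sg (mkt i m) (lk p m)) k"
    by (simp add: swapp_lookup)
qed

lemma meval_swapp: "meval (swapp i p) z = meval p (z \<circ> tau i)"
proof -
  have "meval (swapp i p) z = (\<Sum>m\<in>ks p. lk p m * mono_eval (mkt i m) z)"
    by (subst swapp_expand) (simp add: meval_sum meval_single)
  also have "\<dots> = (\<Sum>m\<in>ks p. lk p m * mono_eval m (z \<circ> tau i))"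
    by (simp add: mono_eval_mk[of "tau i" "tau i"])
  finally show ?thesis by (simp add: meval_alt)
qed

section \<open>Divided difference and Top\<close>

definition rr :: "nat \<Rightarrow> (nat \<Rightarrow>\<^sub>0 nat) \<Rightarrow> (nat \<Rightarrow>\<^sub>0 nat)" where
  "rr i m = Poly_Mapping.update i 0 (Poly_Mapping.update (Suc i) 0 m)"

lemma rr_decomp: "m = rr i m + sg i (lk m i) + sg (Suc i) (lk m (Suc i))"
  by (rule poly_mapping_eqI) (simp add: rr_def lookup_add lookup_update lookup_single when_def)

lemma rr_decomp_t: "mkt i m = rr i m + sg i (lk m (Suc i)) + sg (Suc i) (lk m i)"
  by (rule poly_mapping_eqI)
    (auto simp: rr_def lookup_add lookup_update lookup_single when_def mk_lookup inj_transpose transpose_def)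

definition dq :: "nat \<Rightarrow> (nat \<Rightarrow>\<^sub>0 nat) \<Rightarrow> mpoly" where
  "dq i m = sg (rr i m) 1 * Qd (mvar i) (mvar (Suc i)) (lk m i) (lk m (Suc i))"

lemma dq_eq: "sg m 1 - sg (mkt i m) 1 = (mvar i - mvar (Suc i)) * dq i m"
proof -
  let ?X = "mvar i" and ?Y = "mvar (Suc i)" and ?a = "lk m i" and ?b = "lk m (Suc i)"
  have "sg m (1::K) = sg (rr i m) 1 * ?X ^ ?a * ?Y ^ ?b"
    by (subst (1) rr_decomp[of m i]) (simp add: single_add_1 single_pow)
  moreover have "sg (mkt i m) (1::K) = sg (rr i m) 1 * ?X ^ ?b * ?Y ^ ?a"
    by (subst (1) rr_decomp_t[of i m]) (simp add: single_add_1 single_pow)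
  ultimately have "sg m 1 - sg (mkt i m) 1 = sg (rr i m) 1 * (?X ^ ?a * ?Y ^ ?b - ?X ^ ?b * ?Y ^ ?a)"
    by (simp add: algebra_simps)
  then show ?thesis by (simp add: Qd dq_def algebra_simps)
qed

lemma tdeg_rr: "tdeg m = tdeg (rr i m) + lk m i + lk m (Suc i)"
  by (subst (1) rr_decomp[of m i]) (simp add: tdeg_add)

lemma keys_rr: "ks (rr i m) \<subseteq> ks m"
  by (auto simp: rr_def keys_upd0)

lemma ivd_dq:
  assumes "ks m \<subseteq> S" "i \<in> S" "Suc i \<in> S"
  shows "ivd S (tdeg m - 1) (dq i m) \<and> (tdeg m = 0 \<longrightarrow> dq i m = 0)"
proof (cases "lk m i + lk m (Suc i) = 0")
  case True
  then show ?thesis by (simp add: dq_def)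
next
  case False
  have X: "ivd S 1 (mvar i)" "ivd S 1 (mvar (Suc i))" using assms by (auto intro: ivd_mvar)
  have "ivd S (tdeg (rr i m) + (lk m i + lk m (Suc i) - 1)) (dq i m)"
    unfolding dq_def using assms keys_rr[of i m]
    by (intro ivd_mult ivd_single ivd_Qd X) auto
  then have "ivd S (tdeg m - 1) (dq i m)"
    by (rule ivd_mono) (use False tdeg_rr[of m i] in auto)
  then show ?thesis using False tdeg_rr[of m i] by auto
qed

definition divd :: "nat \<Rightarrow> mpoly \<Rightarrow> mpoly" where
  "divd i f = (\<Sum>m\<in>ks f. mconst (lk f m) * dq i m)"

lemma divd_eq: "f - swapp i f = (mvar i - mvar (Suc i)) * divd i f"
proof -
  have "f - swapp i f = (\<Sum>m\<in>ks f. sg m (lk f m)) - (\<Sum>m\<in>ks f. sg (mkt i m) (lk f m))"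
    by (subst (1) pm_expand, subst swapp_expand) simp
  also have "\<dots> = (\<Sum>m\<in>ks f. mconst (lk f m) * (sg m 1 - sg (mkt i m) 1))"
    by (simp add: sum_subtractf[symmetric] algebra_simps single_mconst[of _ "lk f _"])
  also have "\<dots> = (mvar i - mvar (Suc i)) * divd i f"
    by (simp add: dq_eq divd_def sum_distrib_left algebra_simps)
  finally show ?thesis .
qed

lemma ivd_L_divd:
  assumes "ivd S d f" "i \<in> S" "Suc i \<in> S" "ivd S 1 L"
  shows "ivd S d (L * divd i f)"
  unfolding divd_def sum_distrib_left
proof (rule ivd_sum)
  fix m assume m: "m \<in> ks f"
  then have ms: "ks m \<subseteq> S" "tdeg m \<le> d" using assms(1) by (auto simp: ivd_def)
  show "ivd S d (L * (mconst (lk f m) * dq i m))"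
  proof (cases "tdeg m = 0")
    case True
    then show ?thesis using ivd_dq[OF ms(1) assms(2,3)] by simp
  next
    case False
    have "ivd S (1 + (0 + (tdeg m - 1))) (L * (mconst (lk f m) * dq i m))"
      using ivd_dq[OF ms(1) assms(2,3)] by (intro ivd_mult assms(4) ivd_mconst) auto
    then show ?thesis by (rule ivd_mono) (use False ms in auto)
  qed
qed

lemma mvar_diff_nz: "i \<noteq> j \<Longrightarrow> mvar i - mvar j \<noteq> 0"
proof
  assume ij: "i \<noteq> j" and "mvar i - mvar j = 0"
  then have "mvar i = mvar j" by simp
  then have "lk (mvar i) (sg i 1) = lk (mvar j) (sg i 1)" by simp
  then have "sg j (1::nat) = sg i 1" by (simp add: mvar_def lookup_single when_def split: if_splits)
  then have "lk (sg j (1::nat)) i = lk (sg i 1) i" by simp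
  then show False using ij by (simp add: lookup_single when_def)
qed

lemma Top_eq: "Top i f = mconst tt * f - (mconst tt * mvar i - mvar (Suc i)) * divd i f"
  unfolding Top_def
proof (rule the_equality)
  show "(mvar i - mvar (Suc i)) * (mconst tt * f - (mconst tt * mvar i - mvar (Suc i)) * divd i f) =
    (mvar i - mvar (Suc i)) * (mconst tt * f) - (mconst tt * mvar i - mvar (Suc i)) * (f - swapp i f)"
    by (simp add: divd_eq algebra_simps)
next
  fix g assume "(mvar i - mvar (Suc i)) * g =
    (mvar i - mvar (Suc i)) * (mconst tt * f) - (mconst tt * mvar i - mvar (Suc i)) * (f - swapp i f)"
  then have "(mvar i - mvar (Suc i)) * g = (mvar i - mvar (Suc i)) * (mconst tt * f - (mconst tt * mvar i - mvar (Suc i)) * divd i f)"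
    by (simp add: divd_eq algebra_simps)
  then show "g = mconst tt * f - (mconst tt * mvar i - mvar (Suc i)) * divd i f"
    using mvar_diff_nz[of i "Suc i"] by simp
qed

lemma Top_spec: "(mvar i - mvar (Suc i)) * Top i f =
    (mvar i - mvar (Suc i)) * (mconst tt * f) - (mconst tt * mvar i - mvar (Suc i)) * (f - swapp i f)"
  by (simp add: Top_eq divd_eq algebra_simps)

lemma ivd_Top:
  assumes "ivd S d f" "i \<in> S" "Suc i \<in> S"
  shows "ivd S d (Top i f)"
  unfolding Top_eq
proof (rule ivd_diff)
  show "ivd S d (mconst tt * f)" by (rule ivd_mult_const[OF assms(1)])
  have "ivd S (0 + 1) (mconst tt * mvar i)" using assms by (intro ivd_mult ivd_mconst ivd_mvar) auto
  then have "ivd S 1 (mconst tt * mvar i - mvar (Suc i))" using assms by (auto intro!: ivd_diff ivd_mvar)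
  then show "ivd S d ((mconst tt * mvar i - mvar (Suc i)) * divd i f)"
    by (intro ivd_L_divd assms)
qed

lemma meval_Top:
  assumes "z i \<noteq> z (Suc i)"
  shows "meval (Top i f) z = tt * meval f z
     - (tt * z i - z (Suc i)) / (z i - z (Suc i)) * (meval f z - meval f (z \<circ> tau i))"
proof -
  have "(z i - z (Suc i)) * meval (Top i f) z = (z i - z (Suc i)) * (tt * meval f z)
      - (tt * z i - z (Suc i)) * (meval f z - meval f (z \<circ> tau i))"
    using arg_cong[OF Top_spec, of "\<lambda>p. meval p z"]
    by (simp add: meval_mult meval_diff meval_swapp)
  then show ?thesis using assms by (simp add: field_simps)
qed

lemma single_mult_const: "sg m (a * b) = mconst a * sg m b"
  by (simp add: mconst_def mult_single)


definition subst1 :: "nat \<Rightarrow> K \<Rightarrow> mpoly \<Rightarrow> mpoly" where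
  "subst1 k c p = (\<Sum>m\<in>ks p. sg (Poly_Mapping.update k 0 m) (lk p m * c ^ lk m k))"

lemma meval_subst1: "meval (subst1 k c p) z = meval p (z(k := c))"
proof -
  have "meval (subst1 k c p) z = (\<Sum>m\<in>ks p. lk p m * c ^ lk m k * mono_eval (Poly_Mapping.update k 0 m) z)"
    by (simp add: subst1_def meval_sum meval_single)
  also have "\<dots> = meval p (z(k := c))"
    by (simp add: meval_alt mono_eval_upd algebra_simps)
  finally show ?thesis .
qed

lemma ivd_subst1: "ivd S d p \<Longrightarrow> ivd (S - {k}) d (subst1 k c p)"
  unfolding subst1_def
proof (rule ivd_sum, rule ivd_single)
  fix m assume "ivd S d p" "m \<in> ks p"
  then have "ks m \<subseteq> S" "tdeg m \<le> d" by (auto simp: ivd_def)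
  moreover have "tdeg (Poly_Mapping.update k 0 m) \<le> tdeg m" using tdeg_upd0[of m k] by linarith
  ultimately show "ks (Poly_Mapping.update k 0 m) \<subseteq> S - {k}" "tdeg (Poly_Mapping.update k 0 m) \<le> d"
    by (auto simp: keys_upd0)
qed

definition fq :: "nat \<Rightarrow> K \<Rightarrow> mpoly \<Rightarrow> mpoly" where
  "fq k c p = (\<Sum>m\<in>ks p. mconst (lk p m) * (sg (Poly_Mapping.update k 0 m) 1 * G (mvar k) (mconst c) (lk m k)))"

lemma factor_eq: "p = subst1 k c p + (mvar k - mconst c) * fq k c p"
proof -
  have mono: "sg m 1 - sg (Poly_Mapping.update k 0 m) (c ^ lk m k) =
     (mvar k - mconst c) * (sg (Poly_Mapping.update k 0 m) 1 * G (mvar k) (mconst c) (lk m k))" for m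
  proof -
    have "sg m (1::K) = sg (Poly_Mapping.update k 0 m) 1 * mvar k ^ lk m k"
      by (subst (1) upd_decomp[of m k]) (simp add: single_add_1 single_pow)
    moreover have "sg (Poly_Mapping.update k 0 m) (c ^ lk m k) = sg (Poly_Mapping.update k 0 m) 1 * mconst c ^ lk m k"
      by (simp add: mconst_power single_mconst[of _ "c ^ _"] mult.commute)
    ultimately have "sg m 1 - sg (Poly_Mapping.update k 0 m) (c ^ lk m k) =
       sg (Poly_Mapping.update k 0 m) 1 * (mvar k ^ lk m k - mconst c ^ lk m k)"
      by (simp add: algebra_simps)
    also have "\<dots> = sg (Poly_Mapping.update k 0 m) 1 * ((mvar k - mconst c) * G (mvar k) (mconst c) (lk m k))"
      by (simp only: geom)
    finally show ?thesis by (simp only: ac_simps)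
  qed
  have "p - subst1 k c p = (\<Sum>m\<in>ks p. sg m (lk p m)) - subst1 k c p"
    by (subst (1) pm_expand) simp
  also have "\<dots> = (\<Sum>m\<in>ks p. mconst (lk p m) * (sg m 1 - sg (Poly_Mapping.update k 0 m) (c ^ lk m k)))"
    unfolding subst1_def sum_subtractf[symmetric]
    by (rule sum.cong) (simp_all add: single_mult_const[symmetric] right_diff_distrib)
  also have "\<dots> = (mvar k - mconst c) * fq k c p"
    by (simp add: mono fq_def sum_distrib_left algebra_simps)
  finally show ?thesis by (simp add: algebra_simps)
qed

lemma ivd_fq:
  assumes "ivd S d p" "k \<in> S"
  shows "ivd S (d - 1) (fq k c p)"
  unfolding fq_def
proof (rule ivd_sum)
  fix m assume m: "m \<in> ks p"
  then have ms: "ks m \<subseteq> S" "tdeg m \<le> d" using assms(1) by (auto simp: ivd_def)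
  have X: "ivd S 1 (mvar k)" "ivd S 1 (mconst c)" using assms by (auto intro: ivd_mvar)
  have h: "ivd S (0 + (tdeg (Poly_Mapping.update k 0 m) + (lk m k - 1)))
      (mconst (lk p m) * (sg (Poly_Mapping.update k 0 m) 1 * G (mvar k) (mconst c) (lk m k)))"
    using ms by (intro ivd_mult ivd_mconst ivd_single ivd_G X) (auto simp: keys_upd0)
  then show "ivd S (d - 1) (mconst (lk p m) * (sg (Poly_Mapping.update k 0 m) 1 * G (mvar k) (mconst c) (lk m k)))"
  proof (cases "lk m k = 0")
    case True then show ?thesis by simp
  next
    case False
    show ?thesis by (rule ivd_mono[OF h]) (use False ms tdeg_upd0[of m k] in auto)
  qed
qed

definition rename :: "(nat \<Rightarrow> nat) \<Rightarrow> (nat \<Rightarrow> K) \<Rightarrow> mpoly \<Rightarrow> mpoly" where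
  "rename f \<alpha> p = (\<Sum>m\<in>ks p. sg (Poly_Mapping.map_key f m) (lk p m * mono_eval m \<alpha>))"

lemma meval_rename:
  assumes "\<And>x. f (g x) = x" "\<And>x. g (f x) = x"
  shows "meval (rename f \<alpha> p) y = meval p (\<lambda>k. \<alpha> k * y (g k))"
proof -
  have "meval (rename f \<alpha> p) y = (\<Sum>m\<in>ks p. lk p m * mono_eval m \<alpha> * mono_eval (Poly_Mapping.map_key f m) y)"
    by (simp add: rename_def meval_sum meval_single)
  also have "\<dots> = meval p (\<lambda>k. \<alpha> k * y (g k))"
    by (simp add: meval_alt mono_eval_mk[OF assms] mono_eval_mult_pt o_def algebra_simps)
  finally show ?thesis .
qed

lemma lookup_rename:
  assumes "\<And>x. f (g x) = x" "\<And>x. g (f x) = x"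
  shows "lk (rename f \<alpha> p) (Poly_Mapping.map_key f m) = lk p m * mono_eval m \<alpha>"
proof -
  have inj: "inj (Poly_Mapping.map_key f :: (nat \<Rightarrow>\<^sub>0 nat) \<Rightarrow> _)" by (rule inj_mk[OF assms])
  have "lk (rename f \<alpha> p) (Poly_Mapping.map_key f m) =
     (if Poly_Mapping.map_key f m \<in> Poly_Mapping.map_key f ` ks p
      then lk p (the_inv_into (ks p) (Poly_Mapping.map_key f) (Poly_Mapping.map_key f m)) * mono_eval (the_inv_into (ks p) (Poly_Mapping.map_key f) (Poly_Mapping.map_key f m)) \<alpha> else 0)"
    unfolding rename_def by (rule lookup_sum_single) (auto intro: inj_on_subset[OF inj])
  also have "\<dots> = lk p m * mono_eval m \<alpha>"
  proof (cases "m \<in> ks p")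
    case True
    then show ?thesis using inj by (auto simp: the_inv_into_f_f inj_on_def inj_def)
  next
    case False
    then have "Poly_Mapping.map_key f m \<notin> Poly_Mapping.map_key f ` ks p" using inj by (auto simp: inj_def)
    then show ?thesis using False by (simp add: in_keys_iff)
  qed
  finally show ?thesis .
qed

lemma ivd_rename:
  assumes "\<And>x. f (g x) = x" "\<And>x. g (f x) = x" "g ` S \<subseteq> S" "ivd S d p"
  shows "ivd S d (rename f \<alpha> p)"
  unfolding rename_def
proof (intro ivd_sum ivd_single)
  fix m assume m: "m \<in> ks p"
  then have "ks m \<subseteq> S" "tdeg m \<le> d" using assms(4) by (auto simp: ivd_def)
  then show "ks (Poly_Mapping.map_key f m) \<subseteq> S" "tdeg (Poly_Mapping.map_key f m) \<le> d"
    using assms(3) by (auto simp: keys_mk[OF assms(1,2)] tdeg_mk[OF assms(1,2)])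
qed


lemma monom_X: "[:0, 1:] = monom (1::'a::comm_semiring_1) 1"
  by (rule poly_eqI) (simp add: coeff_pCons split: nat.split)

lemma Fract_monom_pow: "Fract (monom (c::rat poly) k) 1 ^ n = Fract (monom (c ^ n) (k * n)) 1"
  by (induction n) (simp_all add: One_fract_def monom_0[symmetric] mult_monom algebra_simps)

lemma qq_alt: "qq = Fract (monom (monom 1 1) 0) 1"
  by (simp add: qq_def monom_0 monom_X)

lemma tt_alt: "tt = Fract (monom 1 1) 1"
  by (simp add: tt_def monom_X)

lemma monom_pow1: "(monom (1::'a::comm_semiring_1) 1) ^ a = monom 1 a"
  by (induction a) (simp_all add: monom_0[symmetric] mult_monom)

lemma QT: "qq ^ a * tt ^ l = Fract (monom (monom 1 a) l) 1"
  using monom_pow1[where 'a=rat, of a] by (simp add: qq_alt tt_alt Fract_monom_pow mult_monom)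

lemma Fract1_eq: "Fract (x::rat poly poly) 1 = Fract y 1 \<longleftrightarrow> x = y"
  by (simp add: eq_fract)

lemma tt_nz [simp]: "tt \<noteq> 0"
  by (simp add: tt_alt Zero_fract_def Fract1_eq)

lemma qq_nz [simp]: "qq \<noteq> 0"
  by (simp add: qq_alt Zero_fract_def Fract1_eq)

lemma QT_eq: "qq ^ a * tt ^ l = qq ^ b * tt ^ k \<longleftrightarrow> a = b \<and> l = k"
proof
  assume "qq ^ a * tt ^ l = qq ^ b * tt ^ k"
  then have "monom (monom (1::rat) a) l = monom (monom 1 b) k" by (simp add: QT Fract1_eq)
  then have "monom (1::rat) a = monom 1 b \<and> l = k" by (simp add: monom_eq_iff')
  then show "a = b \<and> l = k" by (simp add: monom_eq_iff')
qed simp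

lemma tt_ne_1 [simp]: "tt \<noteq> 1"
  using QT_eq[of 0 1 0 0] by auto

lemma qti_eq: "qq ^ a * inverse tt ^ k = qq ^ b * inverse tt ^ l \<longleftrightarrow> a = b \<and> k = l"
proof -
  have "qq ^ a * inverse tt ^ k = qq ^ b * inverse tt ^ l \<longleftrightarrow>
        (qq ^ a * inverse tt ^ k) * (tt ^ k * tt ^ l) = (qq ^ b * inverse tt ^ l) * (tt ^ k * tt ^ l)"
    by simp
  also have "\<dots> \<longleftrightarrow> qq ^ a * tt ^ l = qq ^ b * tt ^ k"
    by (simp add: field_simps power_inverse)
  finally show ?thesis by (auto simp: QT_eq)
qed

definition ind :: "nat list \<Rightarrow> nat \<Rightarrow> nat \<Rightarrow> nat" where
  "ind v i j = (if (j < i \<and> v ! j > v ! i) \<or> (i < j \<and> v ! j \<ge> v ! i) then 1 else 0)"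

lemma card_sum_ind: "finite S \<Longrightarrow> card {j\<in>S. P j} = (\<Sum>j\<in>S. if P j then 1 else 0)"
  by (simp add: sum.If_cases Int_def conj_commute)

lemma kk_sum: "i < length v \<Longrightarrow> kk v i = (\<Sum>j<length v. ind v i j)"
proof -
  assume i: "i < length v"
  let ?A = "{j. j < i \<and> v ! j > v ! i}" and ?B = "{j. i < j \<and> j < length v \<and> v ! j \<ge> v ! i}"
  have "card ?A + card ?B = card (?A \<union> ?B)"
    by (rule card_Un_disjoint[symmetric]) auto
  also have "?A \<union> ?B = {j\<in>{..<length v}. (j < i \<and> v ! j > v ! i) \<or> (i < j \<and> v ! j \<ge> v ! i)}"
    using i by auto
  also have "card \<dots> = (\<Sum>j<length v. ind v i j)"
    by (subst card_sum_ind) (simp_all add: ind_def)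
  finally show ?thesis by (simp add: kk_def)
qed

lemma tilde_in: "i < length v \<Longrightarrow> tilde v i = qq ^ (v ! i) * inverse tt ^ (\<Sum>j<length v. ind v i j)"
  by (simp add: tilde_def kk_sum)

lemma tilde_out: "\<not> i < length v \<Longrightarrow> tilde v i = 0"
  by (simp add: tilde_def)

lemma tilde_Cons0_0: "tilde (0 # r) 0 = inverse tt ^ length r"
proof -
  have "(\<Sum>j<length (0 # r). ind (0 # r) 0 j) = ind (0 # r) 0 0 + (\<Sum>j<length r. ind (0#r) 0 (Suc j))"
    by (simp only: length_Cons sum.lessThan_Suc_shift)
  also have "\<dots> = length r" by (simp add: ind_def)
  finally show ?thesis by (simp add: tilde_in)
qed

lemma tilde_Cons0_Suc: "tilde (0 # r) (Suc j) = tilde r j"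
proof (cases "j < length r")
  case True
  have "(\<Sum>l<length (0 # r). ind (0 # r) (Suc j) l) = ind (0 # r) (Suc j) 0 + (\<Sum>l<length r. ind (0 # r) (Suc j) (Suc l))"
    by (simp only: length_Cons sum.lessThan_Suc_shift)
  also have "\<dots> = (\<Sum>l<length r. ind r j l)"
    by (simp add: ind_def)
  finally show ?thesis using True by (simp add: tilde_in)
next
  case False then show ?thesis by (simp add: tilde_out)
qed

lemma tilde_shift0: "tilde (Suc a # r) 0 = qq * tilde (r @ [a]) (length r)"
proof -
  have "(\<Sum>l<length (Suc a # r). ind (Suc a # r) 0 l) = ind (Suc a # r) 0 0 + (\<Sum>l<length r. ind (Suc a # r) 0 (Suc l))"
    by (simp only: length_Cons sum.lessThan_Suc_shift)
  also have "\<dots> = (\<Sum>l<length r. if r ! l > a then 1 else 0)"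
    by (simp add: ind_def Suc_le_eq)
  finally have 1: "(\<Sum>l<length (Suc a # r). ind (Suc a # r) 0 l) = (\<Sum>l<length r. if r ! l > a then 1 else 0)" .
  have "(\<Sum>l<length (r @ [a]). ind (r @ [a]) (length r) l) = (\<Sum>l<length r. ind (r @ [a]) (length r) l) + ind (r @ [a]) (length r) (length r)"
    by (simp only: length_append_singleton sum.lessThan_Suc)
  also have "\<dots> = (\<Sum>l<length r. if r ! l > a then 1 else 0)"
    by (simp add: ind_def nth_append)
  finally have 2: "(\<Sum>l<length (r @ [a]). ind (r @ [a]) (length r) l) = (\<Sum>l<length r. if r ! l > a then 1 else 0)" .
  from 1 2 show ?thesis by (simp add: tilde_in nth_append)
qed

lemma tilde_shiftS: "j < length r \<Longrightarrow> tilde (Suc a # r) (Suc j) = tilde (r @ [a]) j"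
proof -
  assume j: "j < length r"
  have "(\<Sum>l<length (Suc a # r). ind (Suc a # r) (Suc j) l) = ind (Suc a # r) (Suc j) 0 + (\<Sum>l<length r. ind (Suc a # r) (Suc j) (Suc l))"
    by (simp only: length_Cons sum.lessThan_Suc_shift)
  also have "\<dots> = (if a \<ge> r ! j then 1 else 0) + (\<Sum>l<length r. ind r j l)"
    by (simp add: ind_def less_Suc_eq_le Suc_le_eq)
  finally have 1: "(\<Sum>l<length (Suc a # r). ind (Suc a # r) (Suc j) l) = (if a \<ge> r ! j then 1 else 0) + (\<Sum>l<length r. ind r j l)" .
  have "(\<Sum>l<length (r @ [a]). ind (r @ [a]) j l) = (\<Sum>l<length r. ind (r @ [a]) j l) + ind (r @ [a]) j (length r)"
    by (simp only: length_append_singleton sum.lessThan_Suc)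
  also have "\<dots> = (\<Sum>l<length r. ind r j l) + (if a \<ge> r ! j then 1 else 0)"
    using j by (simp add: ind_def nth_append)
  finally have 2: "(\<Sum>l<length (r @ [a]). ind (r @ [a]) j l) = (\<Sum>l<length r. ind r j l) + (if a \<ge> r ! j then 1 else 0)" .
  from 1 2 show ?thesis using j by (simp add: tilde_in nth_append)
qed

lemma tilde_eq_val:
  assumes "a < length v" "b < length v" "v ! a = v ! b" "a < b"
  shows "kk v b < kk v a"
proof -
  let ?n = "length v"
  have le: "ind v b l \<le> ind v a l" if "l \<noteq> b" for l
    using assms that by (cases "l = a") (auto simp: ind_def)
  have "(\<Sum>l<?n. ind v b l) = (\<Sum>l\<in>{..<?n} - {b}. ind v b l)"
    using assms by (subst sum.remove[of _ b]) (auto simp: ind_def)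
  also have "\<dots> \<le> (\<Sum>l\<in>{..<?n} - {b}. ind v a l)"
    by (rule sum_mono) (use le in auto)
  also have "\<dots> < (\<Sum>l<?n. ind v a l)"
    using assms by (subst (2) sum.remove[of _ b]) (auto simp: ind_def)
  finally show ?thesis using assms by (simp add: kk_sum)
qed

lemma tilde_distinct:
  assumes "a < length v" "b < length v" "a \<noteq> b"
  shows "tilde v a \<noteq> tilde v b"
proof
  assume eq: "tilde v a = tilde v b"
  then have "v ! a = v ! b \<and> kk v a = kk v b" using assms by (simp add: tilde_def qti_eq)
  then show False using tilde_eq_val[of a v b] tilde_eq_val[of b v a] assms by (cases "a < b") auto
qed

lemma tilde_eq_adj:
  assumes "Suc j < length v" "v ! j = v ! Suc j"
  shows "tilde v (Suc j) = tt * tilde v j"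
proof -
  have pt: "ind v j l = ind v (Suc j) l + (if l = Suc j then 1 else 0)" for l
    using assms by (cases "l = j") (auto simp: ind_def)
  have "(\<Sum>l<length v. ind v j l) = (\<Sum>l<length v. ind v (Suc j) l) + 1"
    using assms by (simp add: pt sum.distrib)
  then show ?thesis using assms
    by (simp add: tilde_in power_inverse field_simps)
qed

lemma swapc_nth: "Suc j < length v \<Longrightarrow> l < length v \<Longrightarrow> swapc j v ! l = v ! tau j l"
  by (auto simp: swapc_def nth_list_update transpose_def)

lemma length_swapc [simp]: "length (swapc j v) = length v"
  by (simp add: swapc_def)

lemma tau_lt: "Suc j < n \<Longrightarrow> l < n \<Longrightarrow> tau j l < n"
  by (auto simp: transpose_def)

lemma tilde_swap:
  assumes "Suc j < length v" "v ! j \<noteq> v ! Suc j"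
  shows "tilde (swapc j v) = tilde v \<circ> tau j"
proof
  fix i
  let ?n = "length v" and ?w = "swapc j v"
  show "tilde ?w i = (tilde v \<circ> tau j) i"
  proof (cases "i < ?n")
    case False
    then have "tau j i = i" using assms by (auto simp: transpose_def)
    then show ?thesis using False by (simp add: tilde_out)
  next
    case True
    have ind: "ind ?w i l = ind v (tau j i) (tau j l)" if "l < ?n" for l
      using assms True that
      by (auto simp: ind_def swapc_nth transpose_def)
    have "(\<Sum>l<?n. ind ?w i l) = (\<Sum>l<?n. ind v (tau j i) (tau j l))"
      by (rule sum.cong) (simp_all add: ind)
    also have "\<dots> = (\<Sum>l<?n. ind v (tau j i) l)"
    proof -
      have "bij_betw (tau j) {..<?n} {..<?n}"
        using assms by (intro bij_betw_imageI) (auto simp: inj_on_def transpose_def image_iff)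
      then show ?thesis by (rule sum.reindex_bij_betw)
    qed
    finally show ?thesis using True assms tau_lt[of j ?n i]
      by (simp add: tilde_in swapc_nth)
  qed
qed

definition pt :: "nat \<Rightarrow> nat list \<Rightarrow> nat \<Rightarrow> K" where
  "pt s v k = (if s \<le> k then tilde v (k - s) else 0)"

lemma pt0 [simp]: "pt 0 v = tilde v"
  by (simp add: pt_def fun_eq_iff)

lemma pt_Cons0: "pt s (0 # r) = (pt (Suc s) r)(s := inverse tt ^ length r)"
proof
  fix k
  show "pt s (0 # r) k = ((pt (Suc s) r)(s := inverse tt ^ length r)) k"
  proof (cases "s < k")
    case True
    then have "k - s = Suc (k - Suc s)" by simp
    then show ?thesis using True by (simp add: pt_def tilde_Cons0_Suc)
  qed (auto simp: pt_def tilde_Cons0_0)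
qed


definition monS :: "nat \<Rightarrow> nat list \<Rightarrow> (nat \<Rightarrow>\<^sub>0 nat)" where
  "monS s v = (\<Sum>j<length v. sg (s + j) (v ! j))"

lemma lk_monS: "lk (monS s v) k = (if s \<le> k \<and> k < s + length v then v ! (k - s) else 0)"
proof -
  have "lk (monS s v) k = (if k \<in> (\<lambda>j. s + j) ` {..<length v} then v ! (the_inv_into {..<length v} (\<lambda>j. s + j) k) else 0)"
    unfolding monS_def by (rule lookup_sum_single) (auto simp: inj_on_def)
  also have "\<dots> = (if s \<le> k \<and> k < s + length v then v ! (k - s) else 0)"
  proof (cases "s \<le> k \<and> k < s + length v")
    case True
    then have "k = s + (k - s)" "k - s < length v" by auto
    then have "the_inv_into {..<length v} (\<lambda>j. s + j) k = k - s"
      by (metis inj_on_def add_left_imp_eq lessThan_iff the_inv_into_f_eq)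
    moreover have "k \<in> (\<lambda>j. s + j) ` {..<length v}" using True by (auto simp: image_iff intro!: bexI[of _ "k - s"])
    ultimately show ?thesis using True by simp
  qed auto
  finally show ?thesis .
qed

lemma tdeg_sum: "tdeg (sum f A) = (\<Sum>a\<in>A. tdeg (f a))"
  by (induction A rule: infinite_finite_induct) (auto simp: tdeg_add)

lemma tdeg_monS: "tdeg (monS s v) = sum_list v"
  by (simp add: monS_def tdeg_sum sum_list_sum_nth atLeast0LessThan)

lemma keys_monS: "ks (monS s v) \<subseteq> {s..<s + length v}"
  by (auto simp: in_keys_iff lk_monS split: if_splits)

lemma mon_monS: "mon v = monS 0 v"
  by (rule poly_mapping_eqI) (simp add: mon_def lk_monS nth_default_def)

lemma monS_Cons0: "monS s (0 # r) = monS (Suc s) r"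
  by (rule poly_mapping_eqI) (auto simp: lk_monS nth_Cons' Suc_diff_Suc)

lemma monS_ConsS: "monS s (Suc a # r) = monS s (a # r) + sg s 1"
  by (rule poly_mapping_eqI) (auto simp: lk_monS lookup_add lookup_single when_def nth_Cons')

lemma lk_monS_s0: "lk (monS s (0 # r)) s = 0"
  by (simp add: lk_monS)

lemma lk_mconst_mult: "lk (mconst c * p) m = c * lk p m"
proof -
  have "mconst c * p = (\<Sum>m'\<in>ks p. sg m' (c * lk p m'))"
    by (subst (1) pm_expand) (simp add: sum_distrib_left mconst_def mult_single)
  then show ?thesis
    by (simp add: lookup_sum lookup_single when_def sum.delta in_keys_iff)
qed

lemma mvar_mult_expand: "mvar k * p = (\<Sum>m'\<in>ks p. sg (sg k 1 + m') (lk p m'))"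
  by (subst (1) pm_expand) (simp add: sum_distrib_left mvar_def mult_single)

lemma lk_mvar_mult: "lk (mvar k * p) (m + sg k 1) = lk p m"
proof -
  have "lk (mvar k * p) (m + sg k 1) = (\<Sum>m'\<in>ks p. if sg k 1 + m' = m + sg k 1 then lk p m' else 0)"
    by (simp add: mvar_mult_expand lookup_sum lookup_single when_def)
  also have "\<dots> = (\<Sum>m'\<in>ks p. if m' = m then lk p m' else 0)"
    by (rule sum.cong) (auto simp: add.commute)
  also have "\<dots> = lk p m" by (simp add: sum.delta' in_keys_iff)
  finally show ?thesis .
qed

lemma lk_mvar_mult0: "lk m k = 0 \<Longrightarrow> lk (mvar k * p) m = 0"
proof -
  assume m: "lk m k = 0"
  have "sg k 1 + x \<noteq> m" for x
  proof
    assume "sg k 1 + x = m"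
    then have "lk (sg k 1 + x) k = lk m k" by simp
    then show False using m by (simp add: lookup_add)
  qed
  then show ?thesis by (simp add: mvar_mult_expand lookup_sum lookup_single when_def)
qed

lemma lk_ivd_big: "ivd S d g \<Longrightarrow> d < tdeg m \<Longrightarrow> lk g m = 0"
  unfolding ivd_def by (metis in_keys_iff leD)

lemma tdeg0: "tdeg m = 0 \<Longrightarrow> m = 0"
  by (rule poly_mapping_eqI) (auto simp: tdeg_def in_keys_iff)

lemma const_poly:
  assumes "\<forall>m\<in>ks p. m = 0"
  shows "p = mconst (lk p 0)" "meval p z = lk p 0"
proof -
  show "p = mconst (lk p 0)"
    by (rule poly_mapping_eqI) (use assms in \<open>auto simp: mconst_def lookup_single when_def in_keys_iff\<close>)
  then show "meval p z = lk p 0" by (metis meval_mconst)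
qed

lemma ivd0_const: "ivd S 0 p \<Longrightarrow> \<forall>m\<in>ks p. m = 0"
  by (auto simp: ivd_def intro: tdeg0)

lemma ivd_empty_const: "ivd {} d p \<Longrightarrow> \<forall>m\<in>ks p. m = 0"
  by (auto simp: ivd_def in_keys_iff intro!: poly_mapping_eqI)

definition Gs :: "nat \<Rightarrow> nat \<Rightarrow> nat \<Rightarrow> nat" where
  "Gs s n k = (if k = s then s + n else if s < k \<and> k \<le> s + n then k - 1 else k)"

definition Fs :: "nat \<Rightarrow> nat \<Rightarrow> nat \<Rightarrow> nat" where
  "Fs s n k = (if k = s + n then s else if s \<le> k \<and> k < s + n then k + 1 else k)"

definition als :: "nat \<Rightarrow> nat \<Rightarrow> K" where
  "als s k = (if k = s then qq else 1)"

definition bes :: "nat \<Rightarrow> nat \<Rightarrow> nat \<Rightarrow> K" where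
  "bes s n k = (if k = s + n then inverse qq else 1)"

lemma FG: "Fs s n (Gs s n k) = k"
  by (auto simp: Fs_def Gs_def)

lemma GF: "Gs s n (Fs s n k) = k"
  by (auto simp: Fs_def Gs_def)

lemma Gs_S: "Gs s n ` {s..<s + Suc n} \<subseteq> {s..<s + Suc n}"
  by (auto simp: Gs_def)

lemma Fs_S: "Fs s n ` {s..<s + Suc n} \<subseteq> {s..<s + Suc n}"
  by (auto simp: Fs_def)

lemma pt_shift:
  assumes "length r = n" "s \<le> k" "k < s + Suc n"
  shows "pt s (Suc a # r) k = als s k * pt s (r @ [a]) (Gs s n k)"
proof (cases "k = s")
  case True
  then show ?thesis using assms by (simp add: pt_def als_def Gs_def tilde_shift0)
next
  case False
  then have "k - s = Suc (k - 1 - s)" "k - 1 - s < length r" using assms by auto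
  then show ?thesis using assms False
    by (simp add: pt_def als_def Gs_def tilde_shiftS)
qed

lemma pt_shift':
  assumes "length r = n" "s \<le> k" "k < s + Suc n"
  shows "pt s (r @ [a]) k = bes s n k * pt s (Suc a # r) (Fs s n k)"
proof -
  have "Fs s n k \<in> {s..<s + Suc n}" using assms by (auto simp: Fs_def)
  then have "pt s (Suc a # r) (Fs s n k) = als s (Fs s n k) * pt s (r @ [a]) k"
    using pt_shift[OF assms(1), of s "Fs s n k" a] by (simp add: GF)
  moreover have "bes s n k * als s (Fs s n k) = 1"
    by (auto simp: bes_def als_def Fs_def)
  ultimately show ?thesis by (metis mult.assoc mult_1)
qed

lemma monS_shift:
  assumes "length r = n"
  shows "Poly_Mapping.map_key (Fs s n) (monS s (a # r)) = monS s (r @ [a])"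
proof -
  have inj: "inj (Fs s n)" by (metis injI GF)
  show ?thesis
    by (rule poly_mapping_eqI)
      (use assms in \<open>auto simp: mk_lookup inj lk_monS Fs_def nth_append nth_Cons' Suc_diff_le\<close>)
qed

lemma mono_eval_als_nz: "mono_eval m (als s) \<noteq> 0"
  by (simp add: mono_eval_def als_def)

lemma rename_zero:
  assumes "\<And>x. f (g x) = x" "\<And>x. g (f x) = x" "\<And>m. mono_eval m \<alpha> \<noteq> 0"
    and "rename f \<alpha> p = 0"
  shows "p = 0"
proof (rule poly_mapping_eqI)
  fix m
  have "lk p m * mono_eval m \<alpha> = 0" using lookup_rename[OF assms(1,2), of \<alpha> p m] assms(4) by simp
  then show "lk p m = lk 0 m" using assms(3)[of m] by simp
qed


section \<open>Unisolvence\<close>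

definition grid :: "nat \<Rightarrow> nat \<Rightarrow> nat list set" where
  "grid n d = {v. length v = n \<and> sum_list v \<le> d}"

definition U1 :: "nat \<Rightarrow> nat \<Rightarrow> nat \<Rightarrow> bool" where
  "U1 s n d \<longleftrightarrow> (\<forall>p. ivd {s..<s+n} d p \<longrightarrow> (\<forall>v\<in>grid n d. meval p (pt s v) = 0) \<longrightarrow> p = 0)"

definition U2 :: "nat \<Rightarrow> nat \<Rightarrow> nat \<Rightarrow> bool" where
  "U2 s n d \<longleftrightarrow> (\<forall>y. \<exists>p. ivd {s..<s+n} d p \<and> (\<forall>v\<in>grid n d. meval p (pt s v) = y v))"

definition U3 :: "nat \<Rightarrow> nat \<Rightarrow> nat \<Rightarrow> bool" where
  "U3 s n d \<longleftrightarrow> (\<forall>p lam. lam \<in> grid n d \<longrightarrow> sum_list lam = d \<longrightarrow> ivd {s..<s+n} d p \<longrightarrow>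
      (\<forall>v\<in>grid n d. v \<noteq> lam \<longrightarrow> meval p (pt s v) = 0) \<longrightarrow> meval p (pt s lam) \<noteq> 0 \<longrightarrow>
      lk p (monS s lam) \<noteq> 0)"

lemma sum_list0_replicate: "sum_list (v::nat list) = 0 \<Longrightarrow> v = replicate (length v) 0"
  by (metis replicate_length_same sum_list_eq_0_iff)

lemma grid_base: "n = 0 \<or> d = 0 \<Longrightarrow> grid n d = {replicate n 0}"
  by (auto simp: grid_def intro: sum_list0_replicate)

lemma monS_rep0: "monS s (replicate n 0) = 0"
  by (rule tdeg0) (simp add: tdeg_monS)

lemma U_base:
  assumes "n = 0 \<or> d = 0"
  shows "U1 s n d \<and> U2 s n d \<and> U3 s n d"
proof -
  have cst: "\<forall>m\<in>ks p. m = 0" if "ivd {s..<s+n} d p" for p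
    using assms that ivd0_const[of _ p] ivd_empty_const[of d p] by auto
  have g: "grid n d = {replicate n 0}" by (rule grid_base[OF assms])
  have "U1 s n d"
    unfolding U1_def
  proof (intro allI impI)
    fix p assume "ivd {s..<s+n} d p" "\<forall>v\<in>grid n d. meval p (pt s v) = 0"
    then show "p = 0" using cst[of p] const_poly[of p] g by (auto simp: mconst_zero)
  qed
  moreover have "U2 s n d"
    unfolding U2_def
  proof
    fix y
    show "\<exists>p. ivd {s..<s+n} d p \<and> (\<forall>v\<in>grid n d. meval p (pt s v) = y v)"
      using g by (intro exI[of _ "mconst (y (replicate n 0))"]) auto
  qed
  moreover have "U3 s n d"
    unfolding U3_def
  proof (intro allI impI)
    fix p lam assume "lam \<in> grid n d" "ivd {s..<s+n} d p" "meval p (pt s lam) \<noteq> 0"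
    then show "lk p (monS s lam) \<noteq> 0" using cst[of p] const_poly[of p] g by (auto simp: monS_rep0)
  qed
  ultimately show ?thesis by simp
qed

lemma grid_cases:
  assumes "v \<in> grid (Suc n) (Suc d)"
  obtains w where "v = 0 # w" "w \<in> grid n (Suc d)"
    | a r where "v = Suc a # r" "length r = n" "r @ [a] \<in> grid (Suc n) d"
proof (cases v)
  case Nil then show ?thesis using assms by (simp add: grid_def)
next
  case (Cons x r)
  show ?thesis
  proof (cases x)
    case 0 then show ?thesis using that assms Cons by (auto simp: grid_def)
  next
    case (Suc a) then show ?thesis using that assms Cons by (auto simp: grid_def)
  qed
qed

lemma grid_snoc:
  assumes "w \<in> grid (Suc n) d"
  obtains a r where "w = r @ [a]" "length r = n" "Suc a # r \<in> grid (Suc n) (Suc d)"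
proof -
  obtain r a where "w = r @ [a]" using assms by (cases w rule: rev_exhaust) (auto simp: grid_def)
  then show ?thesis using that assms by (auto simp: grid_def)
qed

lemma tilde_Suc_ne: "tilde (Suc a # r) 0 \<noteq> inverse tt ^ n"
proof
  assume "tilde (Suc a # r) 0 = inverse tt ^ n"
  then have "qq ^ Suc a * inverse tt ^ kk (Suc a # r) 0 = qq ^ 0 * inverse tt ^ n"
    by (simp add: tilde_def)
  then show False by (simp only: qti_eq) simp
qed

lemma pt_s: "pt s v s = tilde v 0"
  by (simp add: pt_def)

lemma meval_ivd_cong:
  assumes "ivd S d p" "\<And>k. k \<in> S \<Longrightarrow> z k = z' k"
  shows "meval p z = meval p z'"
  using assms by (intro meval_cong) (auto simp: ivd_def)

lemma U_step:
  assumes IHn: "\<And>e. U1 (Suc s) n e \<and> U2 (Suc s) n e \<and> U3 (Suc s) n e"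
    and IHd: "U1 s (Suc n) d \<and> U2 s (Suc n) d \<and> U3 s (Suc n) d"
  shows "U1 s (Suc n) (Suc d) \<and> U2 s (Suc n) (Suc d) \<and> U3 s (Suc n) (Suc d)"
proof -
  define S where "S = {s..<s + Suc n}"
  define S' where "S' = {Suc s..<Suc s + n}"
  define c where "c = (inverse tt ^ n :: K)"
  have SS': "S - {s} = S'" by (auto simp: S_def S'_def)
  have sS: "s \<in> S" by (simp add: S_def)
  have S'S: "S' \<subseteq> S" by (auto simp: S_def S'_def)
  have FG': "\<And>x. Fs s n (Gs s n x) = x" "\<And>x. Gs s n (Fs s n x) = x" by (simp_all add: FG GF)
  have dec: "p = subst1 s c p + (mvar s - mconst c) * fq s c p" for p by (rule factor_eq)
  have ivd_r: "ivd S' e (subst1 s c p)" if "ivd S e p" for e p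
    using ivd_subst1[OF that, of s c] SS' by simp
  have ivd_g: "ivd S (e - 1) (fq s c p)" if "ivd S e p" for e p
    using ivd_fq[OF that sS] .
  have ev_dec: "meval p z = meval (subst1 s c p) z + (z s - c) * meval (fq s c p) z" for p z
    by (subst (1) dec[of p]) (simp add: meval_add meval_mult meval_diff)
  have ev_r0: "meval (subst1 s c p) (pt (Suc s) w) = meval p (pt s (0 # w))" if "length w = n" for p w
    using that by (simp add: meval_subst1 pt_Cons0 c_def)
  have ev_S': "meval r (pt s (0 # w)) = meval r (pt (Suc s) w)" if "ivd S' e r" for r w e
    by (rule meval_ivd_cong[OF that]) (auto simp: S'_def pt_Cons0)
  have sh1: "meval (rename (Fs s n) (als s) g) (pt s (r @ [a])) = meval g (pt s (Suc a # r))"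
    if "ivd S e g" "length r = n" for g r a e
  proof -
    have "meval (rename (Fs s n) (als s) g) (pt s (r @ [a])) = meval g (\<lambda>k. als s k * pt s (r @ [a]) (Gs s n k))"
      by (rule meval_rename[OF FG'])
    also have "\<dots> = meval g (pt s (Suc a # r))"
      by (rule meval_ivd_cong[OF that(1)]) (use that(2) in \<open>auto simp: S_def pt_shift\<close>)
    finally show ?thesis .
  qed
  have sh2: "meval (rename (Gs s n) (bes s n) g) (pt s (Suc a # r)) = meval g (pt s (r @ [a]))"
    if "ivd S e g" "length r = n" for g r a e
  proof -
    have "meval (rename (Gs s n) (bes s n) g) (pt s (Suc a # r)) = meval g (\<lambda>k. bes s n k * pt s (Suc a # r) (Fs s n k))"
      by (rule meval_rename) (simp_all add: FG GF)
    also have "\<dots> = meval g (pt s (r @ [a]))"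
      by (rule meval_ivd_cong[OF that(1)]) (use that(2) in \<open>auto simp: S_def pt_shift'\<close>)
    finally show ?thesis .
  qed
  have ivd_sh1: "ivd S e (rename (Fs s n) (als s) g)" if "ivd S e g" for e g
    by (rule ivd_rename[OF FG' _ that]) (use Gs_S[of s n] in \<open>simp add: S_def\<close>)
  have ivd_sh2: "ivd S e (rename (Gs s n) (bes s n) g)" if "ivd S e g" for e g
    by (rule ivd_rename[OF GF FG _ that]) (use Fs_S[of s n] in \<open>simp add: S_def\<close>)
  have tnc: "tilde (Suc a # r) 0 - c \<noteq> 0" for a r
    using tilde_Suc_ne[of a r n] by (simp add: c_def)
  have IHn1: "U1 (Suc s) n e" and IHn2: "U2 (Suc s) n e" and IHn3: "U3 (Suc s) n e" for e
    using IHn by auto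
  have S'_eq: "{Suc s..<Suc s + n} = S'" by (simp add: S'_def)
  have S_eq: "{s..<s + Suc n} = S" by (simp add: S_def)

  have u1: "U1 s (Suc n) (Suc d)"
    unfolding U1_def S_eq
  proof (intro allI impI)
    fix p assume ivp: "ivd S (Suc d) p" and van: "\<forall>v\<in>grid (Suc n) (Suc d). meval p (pt s v) = 0"
    define r where "r = subst1 s c p"
    define g where "g = fq s c p"
    have ivr: "ivd S' (Suc d) r" using ivd_r[OF ivp] by (simp add: r_def)
    have ivg: "ivd S d g" using ivd_g[OF ivp] by (simp add: g_def)
    have "r = 0"
      using IHn1[of "Suc d"] unfolding U1_def S'_eq
    proof (elim allE impE)
      show "ivd S' (Suc d) r" by (rule ivr)
      show "\<forall>v\<in>grid n (Suc d). meval r (pt (Suc s) v) = 0"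
        using van by (auto simp: r_def ev_r0 grid_def)
    qed
    have g0: "g = 0"
    proof -
      have "rename (Fs s n) (als s) g = 0"
        using conjunct1[OF IHd] unfolding U1_def S_eq
      proof (elim allE impE)
        show "ivd S d (rename (Fs s n) (als s) g)" by (rule ivd_sh1[OF ivg])
        show "\<forall>w\<in>grid (Suc n) d. meval (rename (Fs s n) (als s) g) (pt s w) = 0"
        proof
          fix w assume "w \<in> grid (Suc n) d"
          then obtain a r0 where w: "w = r0 @ [a]" "length r0 = n" "Suc a # r0 \<in> grid (Suc n) (Suc d)"
            by (rule grid_snoc)
          have "meval p (pt s (Suc a # r0)) = 0" using van w by auto
          then have "(tilde (Suc a # r0) 0 - c) * meval g (pt s (Suc a # r0)) = 0"
            using ev_dec[of p "pt s (Suc a # r0)"] \<open>r = 0\<close> by (simp add: r_def g_def pt_s)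
          then have "meval g (pt s (Suc a # r0)) = 0" using tnc by simp
          then show "meval (rename (Fs s n) (als s) g) (pt s w) = 0"
            using sh1[OF ivg w(2)] w(1) by simp
        qed
      qed
      then show ?thesis by (rule rename_zero[OF FG' mono_eval_als_nz])
    qed
    show "p = 0" using dec[of p] \<open>r = 0\<close> g0 by (simp add: r_def g_def)
  qed

  have u2: "U2 s (Suc n) (Suc d)"
    unfolding U2_def S_eq
  proof
    fix y
    obtain r where ivr: "ivd S' (Suc d) r" and r: "\<forall>w\<in>grid n (Suc d). meval r (pt (Suc s) w) = y (0 # w)"
      using IHn2[of "Suc d"] unfolding U2_def S'_eq by (elim allE[of _ "\<lambda>w. y (0 # w)"]) blast
    define y2 where "y2 = (\<lambda>w. (y (Suc (last w) # butlast w) - meval r (pt s (Suc (last w) # butlast w)))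
                             / (tilde (Suc (last w) # butlast w) 0 - c))"
    obtain g' where ivg': "ivd S d g'" and g': "\<forall>w\<in>grid (Suc n) d. meval g' (pt s w) = y2 w"
      using conjunct1[OF conjunct2[OF IHd]] unfolding U2_def S_eq by (elim allE[of _ y2]) blast
    define g where "g = rename (Gs s n) (bes s n) g'"
    have ivg: "ivd S d g" unfolding g_def by (rule ivd_sh2[OF ivg'])
    define p where "p = r + (mvar s - mconst c) * g"
    have ivp: "ivd S (Suc d) p"
      unfolding p_def
    proof (rule ivd_add)
      show "ivd S (Suc d) r" using ivd_mono[OF ivr _ S'S] by simp
      have "ivd S (1 + d) ((mvar s - mconst c) * g)"
        using sS by (intro ivd_mult ivg ivd_diff ivd_mvar ivd_mconst) auto
      then show "ivd S (Suc d) ((mvar s - mconst c) * g)" by simp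
    qed
    have "\<forall>v\<in>grid (Suc n) (Suc d). meval p (pt s v) = y v"
    proof
      fix v assume v: "v \<in> grid (Suc n) (Suc d)"
      have evp: "meval p z = meval r z + (z s - c) * meval g z" for z
        by (simp add: p_def meval_add meval_mult meval_diff)
      show "meval p (pt s v) = y v"
        using v
      proof (cases rule: grid_cases)
        case (1 w)
        then have "length w = n" by (simp add: grid_def)
        have "pt s v s = c" using 1 \<open>length w = n\<close> by (simp add: pt_Cons0 c_def)
        then show ?thesis using evp[of "pt s v"] 1 r ev_S'[OF ivr, of w] by simp
      next
        case (2 a r0)
        have "meval g (pt s v) = meval g' (pt s (r0 @ [a]))"
          unfolding g_def 2 by (rule sh2[OF ivg' 2(2)])
        also have "\<dots> = y2 (r0 @ [a])" using g' 2 by auto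
        also have "\<dots> = (y v - meval r (pt s v)) / (tilde v 0 - c)"
          by (simp add: y2_def 2)
        finally show ?thesis using evp[of "pt s v"] tnc[of a r0] 2 by (simp add: pt_s)
      qed
    qed
    then show "\<exists>p. ivd S (Suc d) p \<and> (\<forall>v\<in>grid (Suc n) (Suc d). meval p (pt s v) = y v)"
      using ivp by blast
  qed

  have u3: "U3 s (Suc n) (Suc d)"
    unfolding U3_def S_eq
  proof (intro allI impI)
    fix p lam
    assume lam: "lam \<in> grid (Suc n) (Suc d)" and slam: "sum_list lam = Suc d" and ivp: "ivd S (Suc d) p"
      and van: "\<forall>v\<in>grid (Suc n) (Suc d). v \<noteq> lam \<longrightarrow> meval p (pt s v) = 0"
      and nz: "meval p (pt s lam) \<noteq> 0"
    define r where "r = subst1 s c p"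
    define g where "g = fq s c p"
    have ivr: "ivd S' (Suc d) r" using ivd_r[OF ivp] by (simp add: r_def)
    have ivg: "ivd S d g" using ivd_g[OF ivp] by (simp add: g_def)
    have lkp: "lk p m = lk r m + lk (mvar s * g) m - c * lk g m" for m
      using arg_cong[OF dec[of p], of "\<lambda>q. lk q m"]
      by (simp add: r_def g_def lookup_add lookup_minus algebra_simps lk_mconst_mult)
    have tdl: "tdeg (monS s lam) = Suc d" by (simp add: tdeg_monS slam)
    have gbig: "lk g (monS s lam) = 0" by (rule lk_ivd_big[OF ivg]) (simp add: tdl)
    show "lk p (monS s lam) \<noteq> 0"
      using lam
    proof (cases rule: grid_cases)
      case (1 lam')
      have ln: "length lam' = n" using 1 by (simp add: grid_def)
      have "lk r (monS (Suc s) lam') \<noteq> 0"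
        using IHn3[of "Suc d"] unfolding U3_def S'_eq
      proof (elim allE impE)
        show "lam' \<in> grid n (Suc d)" using 1 by simp
        show "sum_list lam' = Suc d" using slam 1 by simp
        show "ivd S' (Suc d) r" by (rule ivr)
        show "\<forall>v\<in>grid n (Suc d). v \<noteq> lam' \<longrightarrow> meval r (pt (Suc s) v) = 0"
          using van 1 by (auto simp: r_def ev_r0 grid_def)
        show "meval r (pt (Suc s) lam') \<noteq> 0" using nz 1 ln by (simp add: r_def ev_r0)
      qed
      moreover have "lk (mvar s * g) (monS s lam) = 0"
        by (rule lk_mvar_mult0) (simp add: 1 lk_monS)
      ultimately show ?thesis using lkp[of "monS s lam"] gbig 1 by (simp add: monS_Cons0)
    next
      case (2 a lam'')
      have "r = 0"
        using IHn1[of "Suc d"] unfolding U1_def S'_eq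
      proof (elim allE impE)
        show "ivd S' (Suc d) r" by (rule ivr)
        show "\<forall>v\<in>grid n (Suc d). meval r (pt (Suc s) v) = 0"
          using van 2 by (auto simp: r_def ev_r0 grid_def)
      qed
      define g' where "g' = rename (Fs s n) (als s) g"
      have ivg': "ivd S d g'" unfolding g'_def by (rule ivd_sh1[OF ivg])
      have evg: "meval g' (pt s (r0 @ [b])) = meval p (pt s (Suc b # r0)) / (tilde (Suc b # r0) 0 - c)"
        if "length r0 = n" for r0 b
      proof -
        have "meval p (pt s (Suc b # r0)) = (tilde (Suc b # r0) 0 - c) * meval g (pt s (Suc b # r0))"
          using ev_dec[of p "pt s (Suc b # r0)"] \<open>r = 0\<close> by (simp add: r_def g_def pt_s)
        then show ?thesis using sh1[OF ivg that, of b] tnc[of b r0] by (simp add: g'_def)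
      qed
      have "lk g' (monS s (lam'' @ [a])) \<noteq> 0"
        using conjunct2[OF conjunct2[OF IHd]] unfolding U3_def S_eq
      proof (elim allE impE)
        show "lam'' @ [a] \<in> grid (Suc n) d" using 2 by simp
        show "sum_list (lam'' @ [a]) = d" using slam 2 by simp
        show "ivd S d g'" by (rule ivg')
        show "\<forall>w\<in>grid (Suc n) d. w \<noteq> lam'' @ [a] \<longrightarrow> meval g' (pt s w) = 0"
        proof (intro ballI impI)
          fix w assume w: "w \<in> grid (Suc n) d" "w \<noteq> lam'' @ [a]"
          obtain b r0 where w': "w = r0 @ [b]" "length r0 = n" "Suc b # r0 \<in> grid (Suc n) (Suc d)"
            using grid_snoc[OF w(1)] by blast
          have "Suc b # r0 \<noteq> lam" using w(2) w'(1) 2(1) by auto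
          then have "meval p (pt s (Suc b # r0)) = 0" using van w'(3) by blast
          then show "meval g' (pt s w) = 0" by (simp add: w'(1) evg[OF w'(2)])
        qed
        show "meval g' (pt s (lam'' @ [a])) \<noteq> 0"
          using evg[OF 2(2), of a] nz tnc[of a lam''] 2 by simp
      qed
      then have "lk g (monS s (a # lam'')) \<noteq> 0"
        using lookup_rename[OF FG', of "als s" g "monS s (a # lam'')"] monS_shift[OF 2(2), of s a]
        by (simp add: g'_def)
      moreover have "lk (mvar s * g) (monS s lam) = lk g (monS s (a # lam''))"
        using lk_mvar_mult[of s g "monS s (a # lam'')"] by (simp add: 2 monS_ConsS)
      ultimately show ?thesis using lkp[of "monS s lam"] gbig \<open>r = 0\<close> by simp
    qed
  qed
  show ?thesis using u1 u2 u3 by simp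
qed

theorem unisolvence: "U1 s n d \<and> U2 s n d \<and> U3 s n d"
proof (induction n arbitrary: s d)
  case 0
  then show ?case by (rule U_base) simp
next
  case (Suc n)
  note IHn = Suc.IH
  show ?case
  proof (induction d)
    case 0 then show ?case by (rule U_base) simp
  next
    case (Suc d)
    show ?case by (rule U_step[OF IHn Suc.IH])
  qed
qed


section \<open>Generic Hecke identities\<close>

definition T1g :: "'a::comm_ring_1 \<Rightarrow> ('b \<Rightarrow> 'b \<Rightarrow> 'a) \<Rightarrow> ('b \<Rightarrow> 'b \<Rightarrow> 'b \<Rightarrow> 'a) \<Rightarrow> 'b \<Rightarrow> 'b \<Rightarrow> 'b \<Rightarrow> 'a" where
  "T1g t B H x y u = t * H x y u - B x y * (H x y u - H y x u)"

definition T2g :: "'a::comm_ring_1 \<Rightarrow> ('b \<Rightarrow> 'b \<Rightarrow> 'a) \<Rightarrow> ('b \<Rightarrow> 'b \<Rightarrow> 'b \<Rightarrow> 'a) \<Rightarrow> 'b \<Rightarrow> 'b \<Rightarrow> 'b \<Rightarrow> 'a" where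
  "T2g t B H x y u = t * H x y u - B y u * (H x y u - H x u y)"

lemma braid_gen:
  fixes t :: "'a::comm_ring_1"
  assumes s: "B b a = t + 1 - B a b" "B c a = t + 1 - B a c" "B c b = t + 1 - B b c"
  shows "T1g t B (T2g t B (T1g t B H)) a b c - T2g t B (T1g t B (T2g t B H)) a b c =
     ((t - B a c) * (t + 1 - B a b - B b c) - (t - B a b) * (t - B b c)) *
     ((B a b - B b c) * H a b c - B a b * H b a c + B b c * H a c b)"
  unfolding T1g_def T2g_def s by (simp add: algebra_simps)

lemma quad_gen:
  fixes t :: "'a::comm_ring_1"
  assumes s: "B b a = t + 1 - B a b"
  shows "T1g t B (T1g t B H) a b c = (t - 1) * T1g t B H a b c + t * H a b c"
  unfolding T1g_def s by (simp add: algebra_simps)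

definition S1g :: "'a::comm_ring_1 \<Rightarrow> ('b \<Rightarrow> 'b \<Rightarrow> 'a) \<Rightarrow> ('b \<Rightarrow> 'b \<Rightarrow> 'b \<Rightarrow> 'b \<Rightarrow> 'a) \<Rightarrow> 'b \<Rightarrow> 'b \<Rightarrow> 'b \<Rightarrow> 'b \<Rightarrow> 'a" where
  "S1g t B H x y v w = t * H x y v w - B x y * (H x y v w - H y x v w)"

definition S2g :: "'a::comm_ring_1 \<Rightarrow> ('b \<Rightarrow> 'b \<Rightarrow> 'a) \<Rightarrow> ('b \<Rightarrow> 'b \<Rightarrow> 'b \<Rightarrow> 'b \<Rightarrow> 'a) \<Rightarrow> 'b \<Rightarrow> 'b \<Rightarrow> 'b \<Rightarrow> 'b \<Rightarrow> 'a" where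
  "S2g t B H x y v w = t * H x y v w - B v w * (H x y v w - H x y w v)"

lemma comm_gen:
  fixes t :: "'a::comm_ring_1"
  shows "S1g t B (S2g t B H) a b c d = S2g t B (S1g t B H) a b c d"
  unfolding S1g_def S2g_def by (simp add: algebra_simps)

definition bet :: "K \<Rightarrow> K \<Rightarrow> K" where "bet x y = (tt * x - y) / (x - y)"

lemma bet_swap: "x \<noteq> y \<Longrightarrow> bet y x = tt + 1 - bet x y"
  by (simp add: bet_def field_simps)

lemma bet_YB:
  assumes "a \<noteq> b" "a \<noteq> c" "b \<noteq> c"
  shows "(tt - bet a c) * (tt + 1 - bet a b - bet b c) = (tt - bet a b) * (tt - bet b c)"
proof -
  have nz: "a - b \<noteq> 0" "a - c \<noteq> 0" "b - c \<noteq> 0" using assms by auto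
  have h: "tt - bet x y = y * (1 - tt) / (x - y)" if "x - y \<noteq> 0" for x y
    using that by (simp add: bet_def diff_divide_distrib[symmetric] divide_simps) (simp add: algebra_simps)
  have h2: "1 - bet x y = x * (1 - tt) / (x - y)" if "x - y \<noteq> 0" for x y
    using that by (simp add: bet_def divide_simps) (simp add: algebra_simps)
  have "tt + 1 - bet a b - bet b c = (tt - bet a b) + (1 - bet b c)" by simp
  also have "\<dots> = b * (1 - tt) / (a - b) + b * (1 - tt) / (b - c)" using nz by (simp add: h h2)
  also have "\<dots> = b * (1 - tt) * (a - c) / ((a - b) * (b - c))"
    using nz by (simp add: divide_simps) (simp add: algebra_simps)
  finally have e: "tt + 1 - bet a b - bet b c = b * (1 - tt) * (a - c) / ((a - b) * (b - c))" .
  show ?thesis using nz by (simp add: e h divide_simps)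
qed

definition tauF :: "nat \<Rightarrow> ((nat \<Rightarrow> K) \<Rightarrow> K) \<Rightarrow> (nat \<Rightarrow> K) \<Rightarrow> K" where
  "tauF i F z = tt * F z - bet (z i) (z (Suc i)) * (F z - F (z \<circ> tau i))"

definition good :: "nat \<Rightarrow> (nat \<Rightarrow> K) \<Rightarrow> bool" where
  "good n z \<longleftrightarrow> (\<forall>a<n. \<forall>b<n. a \<noteq> b \<longrightarrow> z a \<noteq> z b)"

lemma good_tau: "good n z \<Longrightarrow> Suc j < n \<Longrightarrow> good n (z \<circ> tau j)"
  unfolding good_def
proof (intro allI impI)
  fix a b assume g: "\<forall>a<n. \<forall>b<n. a \<noteq> b \<longrightarrow> z a \<noteq> z b" and j: "Suc j < n"
    and ab: "a < n" "b < n" "a \<noteq> b"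
  have "tau j a < n" "tau j b < n" "tau j a \<noteq> tau j b" using ab j
    by (auto simp: transpose_def split: if_splits)
  then show "(z \<circ> tau j) a \<noteq> (z \<circ> tau j) b" using g by simp
qed

lemma good_tilde: "length v = n \<Longrightarrow> good n (tilde v)"
  by (auto simp: good_def tilde_distinct)

lemma meval_Top_good:
  assumes "good n z" "Suc i < n"
  shows "meval (Top i f) z = tauF i (meval f) z"
proof -
  have "z i \<noteq> z (Suc i)" using assms by (auto simp: good_def)
  then show ?thesis by (simp add: meval_Top tauF_def bet_def)
qed

lemma tauF_cong:
  assumes "good n z" "Suc i < n" "\<And>w. good n w \<Longrightarrow> Gf w = Gf' w"
  shows "tauF i Gf z = tauF i Gf' z"
  using assms good_tau[OF assms(1,2)] by (simp add: tauF_def)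

definition Pz :: "(nat \<Rightarrow> K) \<Rightarrow> nat \<Rightarrow> K \<Rightarrow> K \<Rightarrow> K \<Rightarrow> nat \<Rightarrow> K" where
  "Pz z i x y u = z(i := x, Suc i := y, Suc (Suc i) := u)"

lemma Pz_tau1: "Pz z i x y u \<circ> tau i = Pz z i y x u"
  by (auto simp: fun_eq_iff Pz_def transpose_def)

lemma Pz_tau2: "Pz z i x y u \<circ> tau (Suc i) = Pz z i x u y"
  by (auto simp: fun_eq_iff Pz_def transpose_def)

lemma Pz_app: "Pz z i x y u i = x" "Pz z i x y u (Suc i) = y" "Pz z i x y u (Suc (Suc i)) = u"
  by (simp_all add: Pz_def)

lemma tauF_Pz1: "tauF i Gf (Pz z i x y u) = T1g tt bet (\<lambda>x y u. Gf (Pz z i x y u)) x y u"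
  by (simp add: tauF_def T1g_def Pz_tau1 Pz_app)

lemma tauF_Pz2: "tauF (Suc i) Gf (Pz z i x y u) = T2g tt bet (\<lambda>x y u. Gf (Pz z i x y u)) x y u"
  by (simp add: tauF_def T2g_def Pz_tau2 Pz_app)

lemma Pz_self: "z = Pz z i (z i) (z (Suc i)) (z (Suc (Suc i)))"
  by (simp add: Pz_def)

lemma pw_braid:
  assumes "good n z" "Suc (Suc i) < n"
  shows "tauF i (tauF (Suc i) (tauF i F)) z = tauF (Suc i) (tauF i (tauF (Suc i) F)) z"
proof -
  let ?a = "z i" and ?b = "z (Suc i)" and ?c = "z (Suc (Suc i))"
  have d: "?a \<noteq> ?b" "?a \<noteq> ?c" "?b \<noteq> ?c" using assms by (auto simp: good_def)
  let ?H = "\<lambda>x y u. F (Pz z i x y u)"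
  have L: "tauF i (tauF (Suc i) (tauF i F)) (Pz z i ?a ?b ?c) = T1g tt bet (T2g tt bet (T1g tt bet ?H)) ?a ?b ?c"
    by (simp add: tauF_Pz1 tauF_Pz2)
  have R: "tauF (Suc i) (tauF i (tauF (Suc i) F)) (Pz z i ?a ?b ?c) = T2g tt bet (T1g tt bet (T2g tt bet ?H)) ?a ?b ?c"
    by (simp add: tauF_Pz1 tauF_Pz2)
  have "T1g tt bet (T2g tt bet (T1g tt bet ?H)) ?a ?b ?c - T2g tt bet (T1g tt bet (T2g tt bet ?H)) ?a ?b ?c = 0"
  proof -
    have s: "bet ?b ?a = tt + 1 - bet ?a ?b" "bet ?c ?a = tt + 1 - bet ?a ?c" "bet ?c ?b = tt + 1 - bet ?b ?c"
      using bet_swap[OF d(1)] bet_swap[OF d(2)] bet_swap[OF d(3)] by simp_all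
    have z: "(tt - bet ?a ?c) * (tt + 1 - bet ?a ?b - bet ?b ?c) - (tt - bet ?a ?b) * (tt - bet ?b ?c) = 0"
      using bet_YB[OF d] by simp
    show ?thesis by (simp only: braid_gen[of bet ?b ?a tt ?c ?H, OF s] z mult_zero_left)
  qed
  then have "tauF i (tauF (Suc i) (tauF i F)) (Pz z i ?a ?b ?c) = tauF (Suc i) (tauF i (tauF (Suc i) F)) (Pz z i ?a ?b ?c)"
    by (simp only: L R right_minus_eq)
  then show ?thesis by (simp only: Pz_self[symmetric])
qed

lemma pw_quad:
  assumes "good n z" "Suc i < n"
  shows "tauF i (tauF i F) z = (tt - 1) * tauF i F z + tt * F z"
proof -
  let ?a = "z i" and ?b = "z (Suc i)" and ?c = "z (Suc (Suc i))"
  have d: "?a \<noteq> ?b" using assms by (auto simp: good_def)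
  let ?H = "\<lambda>x y u. F (Pz z i x y u)"
  have "tauF i (tauF i F) (Pz z i ?a ?b ?c) = T1g tt bet (T1g tt bet ?H) ?a ?b ?c"
    by (simp add: tauF_Pz1)
  also have "\<dots> = (tt - 1) * T1g tt bet ?H ?a ?b ?c + tt * ?H ?a ?b ?c"
    by (rule quad_gen) (rule bet_swap[OF d])
  also have "\<dots> = (tt - 1) * tauF i F (Pz z i ?a ?b ?c) + tt * F (Pz z i ?a ?b ?c)"
    by (simp add: tauF_Pz1)
  finally show ?thesis by (simp only: Pz_self[symmetric])
qed

definition Qz :: "(nat \<Rightarrow> K) \<Rightarrow> nat \<Rightarrow> nat \<Rightarrow> K \<Rightarrow> K \<Rightarrow> K \<Rightarrow> K \<Rightarrow> nat \<Rightarrow> K" where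
  "Qz z i j x y v w = z(i := x, Suc i := y, j := v, Suc j := w)"

lemma pw_comm:
  assumes "Suc i < j"
  shows "tauF i (tauF j F) z = tauF j (tauF i F) z"
proof -
  have t1: "Qz z i j x y v w \<circ> tau i = Qz z i j y x v w" for x y v w
    using assms by (auto simp: fun_eq_iff Qz_def transpose_def)
  have t2: "Qz z i j x y v w \<circ> tau j = Qz z i j x y w v" for x y v w
    using assms by (auto simp: fun_eq_iff Qz_def transpose_def)
  have ap: "Qz z i j x y v w i = x" "Qz z i j x y v w (Suc i) = y" "Qz z i j x y v w j = v" "Qz z i j x y v w (Suc j) = w" for x y v w
    using assms by (simp_all add: Qz_def)
  have q1: "tauF i Gf (Qz z i j x y v w) = S1g tt bet (\<lambda>x y v w. Gf (Qz z i j x y v w)) x y v w" for Gf x y v w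
    by (simp add: tauF_def S1g_def t1 ap)
  have q2: "tauF j Gf (Qz z i j x y v w) = S2g tt bet (\<lambda>x y v w. Gf (Qz z i j x y v w)) x y v w" for Gf x y v w
    by (simp add: tauF_def S2g_def t2 ap)
  have self: "z = Qz z i j (z i) (z (Suc i)) (z j) (z (Suc j))" by (simp add: Qz_def)
  have "tauF i (tauF j F) (Qz z i j (z i) (z (Suc i)) (z j) (z (Suc j))) =
        tauF j (tauF i F) (Qz z i j (z i) (z (Suc i)) (z j) (z (Suc j)))"
    by (simp add: q1 q2 comm_gen)
  then show ?thesis using self by metis
qed


section \<open>Polynomial-level Hecke relations\<close>

lemma vanish_zero:
  assumes "ivd {0..<n} D p" "\<And>v. v \<in> grid n D \<Longrightarrow> meval p (tilde v) = 0"
  shows "p = 0"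
  using conjunct1[OF unisolvence[of 0 n D]] assms unfolding U1_def by simp

lemma good_grid: "v \<in> grid n D \<Longrightarrow> good n (tilde v)"
  by (auto simp: grid_def intro: good_tilde)

lemma ivd_Top0: "ivd {0..<n} D f \<Longrightarrow> Suc i < n \<Longrightarrow> ivd {0..<n} D (Top i f)"
  by (rule ivd_Top) auto

lemma meval_TT:
  assumes "good n z" "Suc i < n" "Suc j < n"
  shows "meval (Top i (Top j f)) z = tauF i (tauF j (meval f)) z"
proof -
  have "meval (Top i (Top j f)) z = tauF i (meval (Top j f)) z" by (rule meval_Top_good[OF assms(1,2)])
  also have "\<dots> = tauF i (tauF j (meval f)) z"
    by (rule tauF_cong[OF assms(1,2)]) (rule meval_Top_good[OF _ assms(3)])
  finally show ?thesis .
qed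

lemma meval_TTT:
  assumes "good n z" "Suc i < n" "Suc j < n" "Suc k < n"
  shows "meval (Top i (Top j (Top k f))) z = tauF i (tauF j (tauF k (meval f))) z"
proof -
  have "meval (Top i (Top j (Top k f))) z = tauF i (meval (Top j (Top k f))) z" by (rule meval_Top_good[OF assms(1,2)])
  also have "\<dots> = tauF i (tauF j (tauF k (meval f))) z"
    by (rule tauF_cong[OF assms(1,2)]) (rule meval_TT[OF _ assms(3,4)])
  finally show ?thesis .
qed

lemma hecke_quad:
  assumes "ivd {0..<n} D f" "Suc i < n"
  shows "Top i (Top i f) = mconst (tt - 1) * Top i f + mconst tt * f"
proof -
  let ?p = "Top i (Top i f) - (mconst (tt - 1) * Top i f + mconst tt * f)"
  have "?p = 0"
  proof (rule vanish_zero)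
    show "ivd {0..<n} D ?p"
      using assms by (intro ivd_diff ivd_add ivd_mult_const ivd_Top0)
  next
    fix v assume v: "v \<in> grid n D"
    have g: "good n (tilde v)" by (rule good_grid[OF v])
    show "meval ?p (tilde v) = 0"
      using pw_quad[OF g assms(2), of "meval f"] meval_TT[OF g assms(2) assms(2), of f] meval_Top_good[OF g assms(2), of f]
      by (simp add: meval_diff meval_add meval_mult)
  qed
  then show ?thesis by simp
qed

lemma hecke_comm:
  assumes "ivd {0..<n} D f" "Suc i < j" "Suc j < n"
  shows "Top i (Top j f) = Top j (Top i f)"
proof -
  have i: "Suc i < n" using assms by simp
  have "Top i (Top j f) - Top j (Top i f) = 0"
  proof (rule vanish_zero)
    show "ivd {0..<n} D (Top i (Top j f) - Top j (Top i f))"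
      using assms i by (intro ivd_diff ivd_Top0)
  next
    fix v assume v: "v \<in> grid n D"
    have g: "good n (tilde v)" by (rule good_grid[OF v])
    show "meval (Top i (Top j f) - Top j (Top i f)) (tilde v) = 0"
      using meval_TT[OF g i assms(3), of f] meval_TT[OF g assms(3) i, of f] pw_comm[OF assms(2)]
      by (simp add: meval_diff)
  qed
  then show ?thesis by simp
qed

lemma hecke_braid:
  assumes "ivd {0..<n} D f" "Suc (Suc i) < n"
  shows "Top i (Top (Suc i) (Top i f)) = Top (Suc i) (Top i (Top (Suc i) f))"
proof -
  have i: "Suc i < n" using assms by simp
  have "Top i (Top (Suc i) (Top i f)) - Top (Suc i) (Top i (Top (Suc i) f)) = 0"
  proof (rule vanish_zero)
    show "ivd {0..<n} D (Top i (Top (Suc i) (Top i f)) - Top (Suc i) (Top i (Top (Suc i) f)))"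
      using assms i by (intro ivd_diff ivd_Top0)
  next
    fix v assume v: "v \<in> grid n D"
    have g: "good n (tilde v)" by (rule good_grid[OF v])
    show "meval (Top i (Top (Suc i) (Top i f)) - Top (Suc i) (Top i (Top (Suc i) f))) (tilde v) = 0"
      using meval_TTT[OF g i assms(2) i, of f] meval_TTT[OF g assms(2) i assms(2), of f] pw_braid[OF g assms(2)]
      by (simp add: meval_diff)
  qed
  then show ?thesis by simp
qed

section \<open>The interpolation polynomial E*\<close>

lemma in_vars_deg_ivd: "in_vars_deg n d p = ivd {0..<n} d p"
  by (simp add: in_vars_deg_def ivd_def lessThan_atLeast0)

lemma mcoeff_lk: "mcoeff p v = lk p (monS 0 v)"
  by (simp add: mcoeff_def mon_monS)

definition Espec :: "nat list \<Rightarrow> mpoly \<Rightarrow> bool" where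
  "Espec lam p \<longleftrightarrow> ivd {0..<length lam} (sum_list lam) p \<and> lk p (monS 0 lam) = 1 \<and>
     (\<forall>v\<in>grid (length lam) (sum_list lam). v \<noteq> lam \<longrightarrow> meval p (tilde v) = 0)"

lemma Espec_unique:
  assumes "Espec lam p1" "Espec lam p2"
  shows "p1 = p2"
proof -
  let ?n = "length lam" and ?d = "sum_list lam"
  let ?q = "p1 - p2"
  have ivq: "ivd {0..<?n} ?d ?q" using assms by (auto simp: Espec_def intro: ivd_diff)
  have lkq: "lk ?q (monS 0 lam) = 0" using assms by (simp add: Espec_def lookup_minus)
  have van: "\<forall>v\<in>grid ?n ?d. v \<noteq> lam \<longrightarrow> meval ?q (tilde v) = 0"
    using assms by (simp add: Espec_def meval_diff)
  have laml: "lam \<in> grid ?n ?d" by (simp add: grid_def)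
  have "meval ?q (tilde lam) = 0"
  proof (rule ccontr)
    assume "meval ?q (tilde lam) \<noteq> 0"
    then have "lk ?q (monS 0 lam) \<noteq> 0"
      using conjunct2[OF conjunct2[OF unisolvence[of 0 ?n ?d]]] ivq van laml unfolding U3_def by simp
    then show False using lkq by simp
  qed
  then have "?q = 0" using van by (intro vanish_zero[OF ivq]) auto
  then show ?thesis by simp
qed

lemma Espec_exists: "\<exists>p. Espec lam p"
proof -
  let ?n = "length lam" and ?d = "sum_list lam"
  obtain p0 where iv: "ivd {0..<?n} ?d p0" and p0: "\<forall>v\<in>grid ?n ?d. meval p0 (tilde v) = (if v = lam then 1 else 0)"
    using conjunct1[OF conjunct2[OF unisolvence[of 0 ?n ?d]]] unfolding U2_def
    by (elim allE[of _ "\<lambda>v. if v = lam then 1 else 0"]) auto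
  have laml: "lam \<in> grid ?n ?d" by (simp add: grid_def)
  have c: "lk p0 (monS 0 lam) \<noteq> 0"
    using conjunct2[OF conjunct2[OF unisolvence[of 0 ?n ?d]]] iv p0 laml unfolding U3_def by simp
  define p where "p = mconst (inverse (lk p0 (monS 0 lam))) * p0"
  have "Espec lam p"
    unfolding Espec_def p_def
    using iv p0 c by (auto simp: ivd_mult_const lk_mconst_mult meval_mult)
  then show ?thesis by blast
qed

lemma Estar_Espec: "Espec lam (Estar lam)"
proof -
  have eq: "(in_vars_deg (length lam) (sum_list lam) p \<and> mcoeff p lam = 1 \<and>
     (\<forall>nu. length nu = length lam \<and> sum_list nu \<le> sum_list lam \<and> nu \<noteq> lam
        \<longrightarrow> meval p (tilde nu) = 0)) = Espec lam p" for p
    by (auto simp: Espec_def in_vars_deg_ivd mcoeff_lk grid_def)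
  obtain p where p: "Espec lam p" using Espec_exists by blast
  have "Estar lam = p"
    unfolding Estar_def eq by (rule the_equality[where P="Espec lam", OF p]) (rule Espec_unique[OF _ p])
  then show ?thesis using p by simp
qed

lemma swapc_swapc: "Suc j < length v \<Longrightarrow> swapc j (swapc j v) = v"
  by (rule nth_equalityI) (auto simp: swapc_nth transpose_def)

lemma swapc_same: "Suc j < length v \<Longrightarrow> v ! j = v ! Suc j \<Longrightarrow> swapc j v = v"
  by (rule nth_equalityI) (auto simp: swapc_nth transpose_def)

lemma mset_swapc: "Suc j < length v \<Longrightarrow> mset (swapc j v) = mset v"
  unfolding swapc_def by (rule mset_swap) auto

lemma sum_list_swapc: "Suc j < length v \<Longrightarrow> sum_list (swapc j v) = sum_list v"
  by (metis mset_swapc sum_mset_sum_list)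

lemma Top_Estar_eq:
  assumes "Suc j < length lam" "lam ! j = lam ! Suc j"
  shows "Top j (Estar lam) = mconst tt * Estar lam"
proof -
  let ?n = "length lam" and ?d = "sum_list lam" and ?E = "Estar lam"
  have E: "Espec lam ?E" by (rule Estar_Espec)
  have ivE: "ivd {0..<?n} ?d ?E" using E by (simp add: Espec_def)
  have vanE: "\<And>v. v \<in> grid ?n ?d \<Longrightarrow> v \<noteq> lam \<Longrightarrow> meval ?E (tilde v) = 0"
    using E by (simp add: Espec_def)
  have "Top j ?E - mconst tt * ?E = 0"
  proof (rule vanish_zero)
    show "ivd {0..<?n} ?d (Top j ?E - mconst tt * ?E)"
      using ivE assms by (intro ivd_diff ivd_Top0 ivd_mult_const)
  next
    fix v assume v: "v \<in> grid ?n ?d"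
    have lv: "length v = ?n" using v by (simp add: grid_def)
    have g: "good ?n (tilde v)" by (rule good_grid[OF v])
    have key: "bet (tilde v j) (tilde v (Suc j)) * (meval ?E (tilde v) - meval ?E (tilde v \<circ> tau j)) = 0"
    proof (cases "v ! j = v ! Suc j")
      case True
      then have "tilde v (Suc j) = tt * tilde v j" using assms lv by (intro tilde_eq_adj) auto
      then show ?thesis by (simp add: bet_def)
    next
      case False
      then have vl: "v \<noteq> lam" using assms by auto
      have sw: "tilde v \<circ> tau j = tilde (swapc j v)"
        using tilde_swap[of j v] False assms lv by simp
      have "swapc j v \<noteq> lam"
      proof
        assume "swapc j v = lam"
        then have "v = swapc j lam" using swapc_swapc[of j v] assms lv by simp
        then show False using swapc_same[OF assms] vl by simp
      qed
      moreover have "swapc j v \<in> grid ?n ?d" using v assms lv by (simp add: grid_def sum_list_swapc)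
      ultimately show ?thesis using vanE[OF v vl] vanE[of "swapc j v"] sw by simp
    qed
    show "meval (Top j ?E - mconst tt * ?E) (tilde v) = 0"
      using meval_Top_good[OF g assms(1), of ?E] key by (simp add: tauF_def meval_diff meval_mult)
  qed
  then show ?thesis by simp
qed


section \<open>Combinatorics of compositions and permutations\<close>

definition incn :: "nat list \<Rightarrow> nat" where
  "incn v = card {(p, r). p < r \<and> r < length v \<and> v ! p < v ! r}"

lemma tau_mono: "p < r \<Longrightarrow> (p, r) \<noteq> (i, Suc i) \<Longrightarrow> tau i p < tau i r"
  by (auto simp: transpose_def)

lemma finite_pairs: "finite {(p, r). p < r \<and> r < (n::nat) \<and> P p r}"
  by (rule finite_subset[of _ "{..<n} \<times> {..<n}"]) auto

lemma incn_swap: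
  assumes "Suc i < length v" "v ! i < v ! Suc i"
  shows "incn (swapc i v) + 1 = incn v"
proof -
  let ?n = "length v" and ?w = "swapc i v"
  let ?A = "{(p, r). p < r \<and> r < ?n \<and> ?w ! p < ?w ! r}"
  let ?B = "{(p, r). p < r \<and> r < ?n \<and> v ! p < v ! r}"
  let ?f = "\<lambda>(p, r). (tau i p, tau i r)"
  have inB: "(i, Suc i) \<in> ?B" using assms by simp
  have bij: "bij_betw ?f ?A (?B - {(i, Suc i)})"
  proof (rule bij_betw_imageI)
    show "inj_on ?f ?A" by (auto simp: inj_on_def) (metis transpose_involutory)+
    show "?f ` ?A = ?B - {(i, Suc i)}"
    proof (intro equalityI subsetI)
      fix x assume "x \<in> ?f ` ?A"
      then obtain p r where x: "x = (tau i p, tau i r)" and pr: "p < r" "r < ?n" "?w ! p < ?w ! r" by auto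
      have ne: "(p, r) \<noteq> (i, Suc i)" using pr assms by (auto simp: swapc_nth)
      have "tau i p < tau i r" by (rule tau_mono[OF pr(1) ne])
      moreover have "tau i r < ?n" using tau_lt[OF assms(1) pr(2)] .
      moreover have "v ! tau i p < v ! tau i r" using pr assms by (simp add: swapc_nth)
      moreover have "(tau i p, tau i r) \<noteq> (i, Suc i)" using ne pr(1) by (auto simp: transpose_def split: if_splits)
      ultimately show "x \<in> ?B - {(i, Suc i)}" using x by simp
    next
      fix x assume x: "x \<in> ?B - {(i, Suc i)}"
      then obtain p r where xe: "x = (p, r)" and pr: "p < r" "r < ?n" "v ! p < v ! r" "(p, r) \<noteq> (i, Suc i)" by auto
      have "tau i p < tau i r" by (rule tau_mono[OF pr(1) pr(4)])
      moreover have "tau i r < ?n" using tau_lt[OF assms(1) pr(2)] .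
      moreover have "tau i p < ?n" using tau_lt[OF assms(1), of p] pr by simp
      moreover have "?w ! tau i p < ?w ! tau i r" using pr assms tau_lt[OF assms(1), of p] tau_lt[OF assms(1) pr(2)]
        by (simp add: swapc_nth)
      ultimately have "(tau i p, tau i r) \<in> ?A" by simp
      moreover have "x = ?f (tau i p, tau i r)" using xe by simp
      ultimately show "x \<in> ?f ` ?A" by blast
    qed
  qed
  have "card ?A = card (?B - {(i, Suc i)})" using bij_betw_same_card[OF bij] .
  also have "\<dots> = card ?B - 1" using inB finite_pairs by (simp add: card_Diff_singleton)
  finally show ?thesis using inB finite_pairs[of ?n] card_gt_0_iff[of ?B] unfolding incn_def by fastforce
qed

lemma sorted_ge_eq:
  assumes "mset v = mset w" "sorted_wrt (\<ge>) v" "sorted_wrt (\<ge>) (w::nat list)"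
  shows "v = w"
proof -
  have "sorted (rev v)" "sorted (rev w)" using assms by (simp_all add: sorted_wrt_rev)
  then have "sort (rev w) = rev v" "sort (rev w) = rev w"
    using assms(1) by (simp_all add: properties_for_sort)
  then show ?thesis by simp
qed

lemma no_ascent_sorted:
  assumes "\<forall>i. Suc i < length v \<longrightarrow> \<not> v ! i < v ! Suc i" and "(v::nat list) = v"
  shows "sorted_wrt (\<ge>) v"
  by (subst sorted_wrt_iff_nth_Suc_transp) (use assms in \<open>auto simp: transp_def not_less\<close>)

lemma swapc_nth_i: "Suc i < length v \<Longrightarrow> swapc i v ! i = v ! Suc i"
  by (simp add: swapc_nth)
lemma swapc_nth_Si: "Suc i < length v \<Longrightarrow> swapc i v ! Suc i = v ! i"
  by (simp add: swapc_nth)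

lemma perm_lt: "\<sigma> permutes {..<n} \<Longrightarrow> a < n \<Longrightarrow> \<sigma> a < n"
  by (metis lessThan_iff permutes_in_image)

lemma perm_inv_lt: "\<sigma> permutes {..<n} \<Longrightarrow> a < n \<Longrightarrow> inv \<sigma> a < n"
  by (metis perm_lt permutes_inv)

locale part =
  fixes lam :: "nat list"
  assumes srt: "sorted_wrt (\<ge>) lam"
begin

definition valid :: "nat list \<Rightarrow> (nat \<Rightarrow> nat) \<Rightarrow> bool" where
  "valid v \<sigma> \<longleftrightarrow> \<sigma> permutes {..<length lam} \<and> actc \<sigma> lam = v"

definition BOP :: "(nat \<Rightarrow> nat) \<Rightarrow> bool" where
  "BOP \<sigma> \<longleftrightarrow> (\<forall>a b. a < b \<and> b < length lam \<and> lam ! a = lam ! b \<longrightarrow> \<sigma> a < \<sigma> b)"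

lemma lam_mono: "a < b \<Longrightarrow> b < length lam \<Longrightarrow> lam ! b \<le> lam ! a"
  using srt by (simp add: sorted_wrt_iff_nth_less)

lemma valid_length: "valid v \<sigma> \<Longrightarrow> length v = length lam"
  by (auto simp: valid_def actc_def)

lemma valid_nth: "valid v \<sigma> \<Longrightarrow> a < length lam \<Longrightarrow> v ! (\<sigma> a) = lam ! a"
proof -
  assume V: "valid v \<sigma>" and a: "a < length lam"
  have P: "\<sigma> permutes {..<length lam}" using V by (simp add: valid_def)
  have "\<sigma> a < length lam" using permutes_in_image[OF P, of a] a by simp
  then show ?thesis using V by (auto simp: valid_def actc_def permutes_inverses[OF P])
qed

lemma valid_lt: "valid v \<sigma> \<Longrightarrow> a < length lam \<Longrightarrow> \<sigma> a < length lam"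
  by (auto simp: valid_def intro: perm_lt)

lemma valid_inv: "valid v \<sigma> \<Longrightarrow> p < length lam \<Longrightarrow> inv \<sigma> p < length lam \<and> \<sigma> (inv \<sigma> p) = p"
  by (auto simp: valid_def permutes_inverses intro: perm_inv_lt)

lemma valid_inj: "valid v \<sigma> \<Longrightarrow> \<sigma> a = \<sigma> b \<Longrightarrow> a = b"
  by (auto simp: valid_def dest: permutes_inj injD)

lemma valid_mset: "valid v \<sigma> \<Longrightarrow> mset v = mset lam"
proof -
  assume V: "valid v \<sigma>"
  have "v = permute_list (inv \<sigma>) lam"
    using V by (auto simp: valid_def actc_def permute_list_def permutes_inv)
  then show ?thesis using V by (simp add: valid_def mset_permute_list permutes_inv)
qed

definition inv_set :: "(nat \<Rightarrow> nat) \<Rightarrow> (nat \<times> nat) set" where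
  "inv_set \<sigma> = {(a, b). a < b \<and> b < length lam \<and> \<sigma> a > \<sigma> b}"

definition blk :: "(nat \<Rightarrow> nat) \<Rightarrow> (nat \<times> nat) set" where
  "blk \<sigma> = {(a, b). a < b \<and> b < length lam \<and> \<sigma> a > \<sigma> b \<and> lam ! a = lam ! b}"

lemma perm_len_inv_set: "perm_len (length lam) \<sigma> = card (inv_set \<sigma>)"
  by (simp add: perm_len_def inv_set_def)

lemma perm_len_decomp:
  assumes V: "valid v \<sigma>"
  shows "perm_len (length lam) \<sigma> = incn v + card (blk \<sigma>)"
proof -
  let ?n = "length lam"
  let ?I1 = "{(a, b). a < b \<and> b < ?n \<and> \<sigma> a > \<sigma> b \<and> lam ! a \<noteq> lam ! b}"
  have split: "inv_set \<sigma> = ?I1 \<union> blk \<sigma>" by (auto simp: inv_set_def blk_def)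
  have fin1: "finite ?I1" by (rule finite_pairs)
  have fin2: "finite (blk \<sigma>)" unfolding blk_def by (rule finite_pairs)
  have card_split: "card (inv_set \<sigma>) = card ?I1 + card (blk \<sigma>)"
    unfolding split by (rule card_Un_disjoint[OF fin1 fin2]) (auto simp: blk_def)
  let ?INC = "{(p, r). p < r \<and> r < length v \<and> v ! p < v ! r}"
  have lv: "length v = ?n" by (rule valid_length[OF V])
  have "bij_betw (\<lambda>(a, b). (\<sigma> b, \<sigma> a)) ?I1 ?INC"
  proof (rule bij_betw_imageI)
    show "inj_on (\<lambda>(a, b). (\<sigma> b, \<sigma> a)) ?I1"
      by (auto simp: inj_on_def dest: valid_inj[OF V])
    show "(\<lambda>(a, b). (\<sigma> b, \<sigma> a)) ` ?I1 = ?INC"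
    proof (intro equalityI subsetI)
      fix x assume "x \<in> (\<lambda>(a, b). (\<sigma> b, \<sigma> a)) ` ?I1"
      then obtain a b where x: "x = (\<sigma> b, \<sigma> a)" and ab: "a < b" "b < ?n" "\<sigma> a > \<sigma> b" "lam ! a \<noteq> lam ! b"
        by auto
      have "lam ! b < lam ! a" using lam_mono[OF ab(1,2)] ab(4) by simp
      then show "x \<in> ?INC" using x ab valid_nth[OF V, of a] valid_nth[OF V, of b] valid_lt[OF V, of a] lv by auto
    next
      fix x assume "x \<in> ?INC"
      then obtain p r where x: "x = (p, r)" and pr: "p < r" "r < ?n" "v ! p < v ! r" using lv by auto
      define a where "a = inv \<sigma> r"
      define b where "b = inv \<sigma> p"
      have ia: "a < ?n" "\<sigma> a = r" using valid_inv[OF V pr(2)] by (auto simp: a_def)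
      have ib: "b < ?n" "\<sigma> b = p" using valid_inv[OF V, of p] pr by (auto simp: b_def)
      have la: "lam ! a = v ! r" "lam ! b = v ! p" using valid_nth[OF V ia(1)] valid_nth[OF V ib(1)] ia ib by auto
      have "a < b"
      proof (rule ccontr)
        assume "\<not> a < b"
        then have "b \<le> a" by simp
        then have "lam ! a \<le> lam ! b" using lam_mono[of b a] ia by (cases "b = a") auto
        then show False using la pr by simp
      qed
      then have "(a, b) \<in> ?I1" using ia ib la pr by auto
      then show "x \<in> (\<lambda>(a, b). (\<sigma> b, \<sigma> a)) ` ?I1" using x ia ib by force
    qed
  qed
  then have "card ?I1 = incn v" unfolding incn_def by (rule bij_betw_same_card)
  then show ?thesis using card_split perm_len_inv_set by simp
qed

lemma blk_empty_iff: "valid v \<sigma> \<Longrightarrow> BOP \<sigma> \<longleftrightarrow> blk \<sigma> = {}"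
proof
  assume "valid v \<sigma>" "BOP \<sigma>"
  then show "blk \<sigma> = {}" unfolding BOP_def blk_def by force
next
  assume V: "valid v \<sigma>" and E: "blk \<sigma> = {}"
  show "BOP \<sigma>" unfolding BOP_def
  proof (intro allI impI)
    fix a b assume ab: "a < b \<and> b < length lam \<and> lam ! a = lam ! b"
    then have "\<not> \<sigma> a > \<sigma> b" using E unfolding blk_def by blast
    moreover have "\<sigma> a \<noteq> \<sigma> b" using ab valid_inj[OF V, of a b] by auto
    ultimately show "\<sigma> a < \<sigma> b" by simp
  qed
qed

lemma perm_len_BOP: "valid v \<sigma> \<Longrightarrow> BOP \<sigma> \<Longrightarrow> perm_len (length lam) \<sigma> = incn v"
  using perm_len_decomp blk_empty_iff by simp

lemma perm_len_ge: "valid v \<sigma> \<Longrightarrow> incn v \<le> perm_len (length lam) \<sigma>"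
  using perm_len_decomp by simp

lemma perm_len_eq_BOP: "valid v \<sigma> \<Longrightarrow> perm_len (length lam) \<sigma> = incn v \<Longrightarrow> BOP \<sigma>"
  using perm_len_decomp[of v \<sigma>] blk_empty_iff[of v \<sigma>] card_eq_0_iff[of "blk \<sigma>"]
  unfolding blk_def using finite_pairs by auto

lemma valid_swap:
  assumes V: "valid v \<sigma>" and i: "Suc i < length lam"
  shows "valid (swapc i v) (tau i \<circ> \<sigma>)"
proof -
  have P: "\<sigma> permutes {..<length lam}" using V by (simp add: valid_def)
  have P2: "tau i \<circ> \<sigma> permutes {..<length lam}"
    by (rule permutes_compose[OF P permutes_swap_id]) (use i in auto)
  have "actc (tau i \<circ> \<sigma>) lam = swapc i v"
  proof (rule nth_equalityI)
    show "length (actc (tau i \<circ> \<sigma>) lam) = length (swapc i v)"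
      using valid_length[OF V] by (simp add: actc_def)
  next
    fix j assume "j < length (actc (tau i \<circ> \<sigma>) lam)"
    then have j: "j < length lam" by (simp add: actc_def)
    have inv: "inv (tau i \<circ> \<sigma>) = inv \<sigma> \<circ> tau i"
      using P by (simp add: o_inv_distrib permutes_bij)
    have "actc (tau i \<circ> \<sigma>) lam ! j = lam ! inv \<sigma> (tau i j)" using j by (simp add: actc_def inv)
    also have "\<dots> = v ! tau i j"
      using V tau_lt[OF i j] by (auto simp: valid_def actc_def)
    also have "\<dots> = swapc i v ! j" using swapc_nth[of i v j] valid_length[OF V] i j by simp
    finally show "actc (tau i \<circ> \<sigma>) lam ! j = swapc i v ! j" .
  qed
  then show ?thesis using P2 by (simp add: valid_def)
qed

lemma BOP_swap:
  assumes V: "valid v \<sigma>" and B: "BOP \<sigma>" and i: "Suc i < length lam" and ne: "v ! i \<noteq> v ! Suc i"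
  shows "BOP (tau i \<circ> \<sigma>)"
  unfolding BOP_def
proof (intro allI impI)
  fix a b assume ab: "a < b \<and> b < length lam \<and> lam ! a = lam ! b"
  have lt: "\<sigma> a < \<sigma> b" using B ab by (simp add: BOP_def)
  have "(\<sigma> a, \<sigma> b) \<noteq> (i, Suc i)"
  proof
    assume "(\<sigma> a, \<sigma> b) = (i, Suc i)"
    then show False using valid_nth[OF V, of a] valid_nth[OF V, of b] ab ne by auto
  qed
  then show "(tau i \<circ> \<sigma>) a < (tau i \<circ> \<sigma>) b" using tau_mono[OF lt] by simp
qed

lemma BOP_unique:
  assumes V1: "valid v \<sigma>1" and B1: "BOP \<sigma>1" and V2: "valid v \<sigma>2" and B2: "BOP \<sigma>2"
  shows "\<sigma>1 = \<sigma>2"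
proof
  fix a
  let ?n = "length lam"
  show "\<sigma>1 a = \<sigma>2 a"
  proof (cases "a < ?n")
    case False
    then have "\<sigma>1 a = a" "\<sigma>2 a = a" using V1 V2 unfolding valid_def
      by (meson lessThan_iff permutes_not_in)+
    then show ?thesis by simp
  next
    case True
    let ?P = "{p. p < ?n \<and> v ! p = lam ! a}"
    have cnt: "card {p \<in> ?P. p < \<sigma> a} = card {b. b < a \<and> lam ! b = lam ! a}"
      if V: "valid v \<sigma>" and B: "BOP \<sigma>" for \<sigma>
    proof -
      have "bij_betw \<sigma> {b. b < a \<and> lam ! b = lam ! a} {p \<in> ?P. p < \<sigma> a}"
      proof (rule bij_betw_imageI)
        show "inj_on \<sigma> {b. b < a \<and> lam ! b = lam ! a}" by (auto simp: inj_on_def dest: valid_inj[OF V])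
        show "\<sigma> ` {b. b < a \<and> lam ! b = lam ! a} = {p \<in> ?P. p < \<sigma> a}"
        proof (intro equalityI subsetI)
          fix x assume "x \<in> \<sigma> ` {b. b < a \<and> lam ! b = lam ! a}"
          then obtain b where b: "x = \<sigma> b" "b < a" "lam ! b = lam ! a" by auto
          then show "x \<in> {p \<in> ?P. p < \<sigma> a}"
            using B True valid_lt[OF V, of b] valid_nth[OF V, of b] by (auto simp: BOP_def)
        next
          fix x assume x: "x \<in> {p \<in> ?P. p < \<sigma> a}"
          define b where "b = inv \<sigma> x"
          have ib: "b < ?n" "\<sigma> b = x" using valid_inv[OF V, of x] x by (auto simp: b_def)
          have lb: "lam ! b = lam ! a" using valid_nth[OF V ib(1)] ib x by simp
          have "b < a"
          proof (rule ccontr)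
            assume "\<not> b < a"
            then have "a = b \<or> a < b" by auto
            then show False
            proof
              assume "a = b" then show False using ib x by simp
            next
              assume "a < b" then have "\<sigma> a < \<sigma> b" using B ib lb unfolding BOP_def by metis
              then show False using ib x by simp
            qed
          qed
          then show "x \<in> \<sigma> ` {b. b < a \<and> lam ! b = lam ! a}" using ib lb by auto
        qed
      qed
      then show ?thesis by (simp add: bij_betw_same_card)
    qed
    have in1: "\<sigma>1 a \<in> ?P" using valid_lt[OF V1 True] valid_nth[OF V1 True] by simp
    have in2: "\<sigma>2 a \<in> ?P" using valid_lt[OF V2 True] valid_nth[OF V2 True] by simp
    have mono: "card {p \<in> ?P. p < x} < card {p \<in> ?P. p < y}" if "x \<in> ?P" "x < y" for x y
      by (rule psubset_card_mono) (use that in auto)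
    have eq: "card {p \<in> ?P. p < \<sigma>1 a} = card {p \<in> ?P. p < \<sigma>2 a}" using cnt[OF V1 B1] cnt[OF V2 B2] by simp
    show ?thesis
    proof (rule ccontr)
      assume "\<sigma>1 a \<noteq> \<sigma>2 a"
      then have "\<sigma>1 a < \<sigma>2 a \<or> \<sigma>2 a < \<sigma>1 a" by auto
      then show False using mono[OF in1] mono[OF in2] eq by fastforce
    qed
  qed
qed

lemma valid_id: "valid lam id"
  by (simp add: valid_def actc_def map_nth)

lemma BOP_id: "BOP id"
  by (simp add: BOP_def)

lemma BOP_exists: "mset v = mset lam \<Longrightarrow> \<exists>\<sigma>. valid v \<sigma> \<and> BOP \<sigma>"
proof (induction "incn v" arbitrary: v rule: less_induct)
  case less
  have lv: "length v = length lam" using less.prems by (metis size_mset)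
  show ?case
  proof (cases "\<exists>i. Suc i < length v \<and> v ! i < v ! Suc i")
    case False
    then have "sorted_wrt (\<ge>) v" by (intro no_ascent_sorted) auto
    then have "v = lam" using sorted_ge_eq[OF less.prems _ srt] by simp
    then show ?thesis using valid_id BOP_id by blast
  next
    case True
    then obtain i where i: "Suc i < length v" "v ! i < v ! Suc i" by blast
    let ?w = "swapc i v"
    have "incn ?w < incn v" using incn_swap[OF i] by simp
    moreover have "mset ?w = mset lam" using mset_swapc[OF i(1)] less.prems by simp
    ultimately obtain \<sigma> where V: "valid ?w \<sigma>" and B: "BOP \<sigma>" using less.hyps by blast
    have i': "Suc i < length lam" using i lv by simp
    have "valid (swapc i ?w) (tau i \<circ> \<sigma>)" by (rule valid_swap[OF V i'])
    moreover have "swapc i ?w = v" using swapc_swapc i by simp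
    moreover have "BOP (tau i \<circ> \<sigma>)"
      using BOP_swap[OF V B i'] i by (simp add: swapc_nth_i swapc_nth_Si)
    ultimately show ?thesis by auto
  qed
qed

abbreviation sig :: "nat list \<Rightarrow> (nat \<Rightarrow> nat)" where
  "sig v \<equiv> sigma_of lam v"

lemma sig_props:
  assumes "mset v = mset lam"
  shows "valid v (sig v)" "BOP (sig v)" "perm_len (length lam) (sig v) = incn v"
proof -
  obtain \<sigma>0 where V0: "valid v \<sigma>0" and B0: "BOP \<sigma>0" using BOP_exists[OF assms] by blast
  have vdef: "(\<lambda>\<sigma>. \<sigma> permutes {..<length lam} \<and> actc \<sigma> lam = v) = (\<lambda>\<sigma>. valid v \<sigma>)"
    by (simp add: valid_def fun_eq_iff)
  show V: "valid v (sig v)"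
    unfolding sigma_of_def vdef by (rule arg_min_natI[of "valid v", OF V0])
  have "perm_len (length lam) (sig v) \<le> perm_len (length lam) \<sigma>0"
    unfolding sigma_of_def vdef by (rule arg_min_nat_le[of "valid v", OF V0])
  then have "perm_len (length lam) (sig v) \<le> incn v" using perm_len_BOP[OF V0 B0] by simp
  then show L: "perm_len (length lam) (sig v) = incn v" using perm_len_ge[OF V] by simp
  show "BOP (sig v)" by (rule perm_len_eq_BOP[OF V L])
qed

lemma sig_eq: "mset v = mset lam \<Longrightarrow> valid v \<sigma> \<Longrightarrow> BOP \<sigma> \<Longrightarrow> sig v = \<sigma>"
  using BOP_unique sig_props by blast

lemma sig_swap:
  assumes "mset v = mset lam" "Suc i < length lam" "v ! i \<noteq> v ! Suc i"
  shows "sig (swapc i v) = tau i \<circ> sig v"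
proof -
  have lv: "length v = length lam" using assms(1) by (metis size_mset)
  have "mset (swapc i v) = mset lam" using mset_swapc[of i v] assms lv by simp
  then show ?thesis
    using sig_eq valid_swap[OF sig_props(1)[OF assms(1)] assms(2)] BOP_swap[OF sig_props(1,2)[OF assms(1)] assms(2,3)]
    by blast
qed

lemma sig_lam: "sig lam = id"
  using sig_eq[OF refl valid_id BOP_id] .

end


lemma perm_len_tau_le:
  assumes P: "\<tau> permutes {..<n}" and j: "Suc j < n"
  shows "perm_len n (tau j \<circ> \<tau>) \<le> perm_len n \<tau> + 1"
proof -
  let ?J = "{(a, b). a < b \<and> b < n \<and> \<tau> a > \<tau> b}"
  let ?J' = "{(a, b). a < b \<and> b < n \<and> (tau j \<circ> \<tau>) a > (tau j \<circ> \<tau>) b}"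
  have sub: "?J' \<subseteq> insert (inv \<tau> j, inv \<tau> (Suc j)) ?J"
  proof
    fix x assume "x \<in> ?J'"
    then obtain a b where x: "x = (a, b)" and ab: "a < b" "b < n" "tau j (\<tau> a) > tau j (\<tau> b)" by auto
    show "x \<in> insert (inv \<tau> j, inv \<tau> (Suc j)) ?J"
    proof (cases "\<tau> a > \<tau> b")
      case True then show ?thesis using x ab by auto
    next
      case False
      have "\<tau> a \<noteq> \<tau> b" using ab permutes_inj[OF P] by (auto dest: injD)
      then have lt: "\<tau> a < \<tau> b" using False by simp
      have "(\<tau> a, \<tau> b) = (j, Suc j)"
      proof (rule ccontr)
        assume "(\<tau> a, \<tau> b) \<noteq> (j, Suc j)"
        then have "tau j (\<tau> a) < tau j (\<tau> b)" by (rule tau_mono[OF lt])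
        then show False using ab by simp
      qed
      then have "a = inv \<tau> j" "b = inv \<tau> (Suc j)" using permutes_inverses(2)[OF P] by (metis prod.inject)+
      then show ?thesis using x by simp
    qed
  qed
  have "card ?J' \<le> card (insert (inv \<tau> j, inv \<tau> (Suc j)) ?J)"
    by (rule card_mono[OF _ sub]) (simp add: finite_pairs)
  also have "\<dots> \<le> card ?J + 1" by (simp add: card_insert_if finite_pairs)
  finally show ?thesis by (simp add: perm_len_def)
qed

lemma word_perm_Nil [simp]: "word_perm [] = id"
  by (simp add: word_perm_def)

lemma word_perm_Cons [simp]: "word_perm (i # w) = tau i \<circ> word_perm w"
  by (simp add: word_perm_def)

lemma word_perm_permutes: "\<forall>i\<in>set w. Suc i < n \<Longrightarrow> word_perm w permutes {..<n}"
  by (induction w) (auto intro!: permutes_compose permutes_swap_id)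

lemma perm_len_id: "perm_len n id = 0"
proof -
  have e: "{(a, b). a < b \<and> b < n \<and> b < a} = {}" by auto
  show ?thesis by (simp add: perm_len_def e)
qed

lemma perm_len_word: "\<forall>i\<in>set w. Suc i < n \<Longrightarrow> perm_len n (word_perm w) \<le> length w"
proof (induction w)
  case Nil then show ?case using perm_len_id[of n] by (simp add: id_def)
next
  case (Cons i w)
  have "perm_len n (tau i \<circ> word_perm w) \<le> perm_len n (word_perm w) + 1"
    using Cons.prems by (intro perm_len_tau_le word_perm_permutes) auto
  then show ?case using Cons by (simp add: comp_def)
qed

lemma tau_tau_o: "tau i \<circ> (tau i \<circ> f) = f"
  by (simp add: fun_eq_iff)

lemma swapc_comm: "Suc i < j \<Longrightarrow> Suc j < length v \<Longrightarrow> swapc i (swapc j v) = swapc j (swapc i v)"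
  by (rule nth_equalityI) (auto simp: swapc_nth transpose_def)

lemma swapc_braid: "Suc (Suc i) < length v \<Longrightarrow>
   swapc i (swapc (Suc i) (swapc i v)) = swapc (Suc i) (swapc i (swapc (Suc i) v))"
  by (rule nth_equalityI) (auto simp: swapc_nth transpose_def)

lemma Top_smult: "Top i (mconst c * f) = mconst c * Top i f"
proof -
  have sw: "swapp i (mconst c * f) = mconst c * swapp i f"
    by (rule poly_mapping_eqI) (simp add: swapp_lookup lk_mconst_mult)
  have "(mvar i - mvar (Suc i)) * Top i (mconst c * f) =
      mconst c * ((mvar i - mvar (Suc i)) * (mconst tt * f) - (mconst tt * mvar i - mvar (Suc i)) * (f - swapp i f))"
    by (simp only: Top_spec sw) (simp add: algebra_simps)
  also have "\<dots> = mconst c * ((mvar i - mvar (Suc i)) * Top i f)" by (simp only: Top_spec)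
  also have "\<dots> = (mvar i - mvar (Suc i)) * (mconst c * Top i f)" by (simp only: ac_simps)
  finally have "(mvar i - mvar (Suc i)) * Top i (mconst c * f) = (mvar i - mvar (Suc i)) * (mconst c * Top i f)" .
  then show ?thesis using mvar_diff_nz[of i "Suc i"] by simp
qed

context part
begin

abbreviation nn where "nn \<equiv> length lam"
abbreviation EE where "EE \<equiv> Estar lam"
abbreviation dd where "dd \<equiv> sum_list lam"

lemma mset_len: "mset v = mset lam \<Longrightarrow> length v = nn"
  by (metis size_mset)

lemma red_cons:
  assumes m: "mset v = mset lam" and i: "Suc i < nn" and a: "v ! i < v ! Suc i"
    and r: "reduced_word nn (sig (swapc i v)) w"
  shows "reduced_word nn (sig v) (i # w)"
proof -
  have lv: "length v = nn" by (rule mset_len[OF m])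
  have m2: "mset (swapc i v) = mset lam" using mset_swapc[of i v] i lv m by simp
  have s: "sig (swapc i v) = tau i \<circ> sig v" using sig_swap[OF m i] a by simp
  have "word_perm (i # w) = sig v" using r s by (simp add: reduced_word_def tau_tau_o)
  moreover have "length (i # w) = perm_len nn (sig v)"
    using r sig_props(3)[OF m2] sig_props(3)[OF m] incn_swap[of i v] i lv a
    by (simp add: reduced_word_def)
  ultimately show ?thesis using r i by (simp add: reduced_word_def)
qed

lemma red_exists: "mset v = mset lam \<Longrightarrow> \<exists>w. reduced_word nn (sig v) w"
proof (induction "incn v" arbitrary: v rule: less_induct)
  case less
  have lv: "length v = nn" by (rule mset_len[OF less.prems])
  show ?case
  proof (cases "\<exists>i. Suc i < length v \<and> v ! i < v ! Suc i")
    case False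
    then have "sorted_wrt (\<ge>) v" by (intro no_ascent_sorted) auto
    then have "v = lam" using sorted_ge_eq[OF less.prems _ srt] by simp
    then have "reduced_word nn (sig v) []" by (simp add: reduced_word_def sig_lam perm_len_id)
    then show ?thesis by blast
  next
    case True
    then obtain i where i: "Suc i < length v" "v ! i < v ! Suc i" by blast
    have "incn (swapc i v) < incn v" using incn_swap[OF i] by simp
    moreover have "mset (swapc i v) = mset lam" using mset_swapc[OF i(1)] less.prems by simp
    ultimately obtain w where "reduced_word nn (sig (swapc i v)) w" using less.hyps by blast
    then show ?thesis using red_cons[OF less.prems _ i(2)] i lv by auto
  qed
qed

lemma red_head:
  assumes m: "mset v = mset lam" and r: "reduced_word nn (sig v) (i # w)"
  shows "Suc i < nn \<and> v ! i < v ! Suc i \<and> reduced_word nn (sig (swapc i v)) w"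
proof -
  have lv: "length v = nn" by (rule mset_len[OF m])
  have i: "Suc i < nn" using r by (simp add: reduced_word_def)
  have ws: "\<forall>k\<in>set w. Suc k < nn" using r by (simp add: reduced_word_def)
  have wp: "word_perm w = tau i \<circ> sig v"
    using r by (simp add: reduced_word_def) (metis tau_tau_o)
  have len: "length w + 1 = incn v" using r sig_props(3)[OF m] by (simp add: reduced_word_def)
  have le: "perm_len nn (tau i \<circ> sig v) \<le> length w" using perm_len_word[OF ws] wp by simp
  have m2: "mset (swapc i v) = mset lam" using mset_swapc[of i v] i lv m by simp
  consider "v ! i > v ! Suc i" | "v ! i = v ! Suc i" | "v ! i < v ! Suc i" by linarith
  then have asc: "v ! i < v ! Suc i"
  proof cases
    case 1
    have s: "sig (swapc i v) = tau i \<circ> sig v" using sig_swap[OF m i] 1 by simp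
    have "incn (swapc i (swapc i v)) + 1 = incn (swapc i v)"
      using incn_swap[of i "swapc i v"] i lv 1 by (simp add: swapc_nth_i swapc_nth_Si)
    then have "incn v + 1 = incn (swapc i v)" using swapc_swapc[of i v] i lv by simp
    then show ?thesis using le s sig_props(3)[OF m2] len by simp
  next
    case 2
    have "valid (swapc i v) (tau i \<circ> sig v)" by (rule valid_swap[OF sig_props(1)[OF m] i])
    then have "valid v (tau i \<circ> sig v)" using swapc_same[of i v] 2 i lv by simp
    then have "incn v \<le> perm_len nn (tau i \<circ> sig v)" by (rule perm_len_ge)
    then show ?thesis using le len by simp
  qed
  have s: "sig (swapc i v) = tau i \<circ> sig v" using sig_swap[OF m i] asc by simp
  have "incn (swapc i v) + 1 = incn v" using incn_swap[of i v] i lv asc by simp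
  then have "reduced_word nn (sig (swapc i v)) w"
    using ws wp s sig_props(3)[OF m2] len by (simp add: reduced_word_def)
  then show ?thesis using i asc by simp
qed

lemma ivd_foldr: "\<forall>k\<in>set w. Suc k < nn \<Longrightarrow> ivd {0..<nn} dd (foldr Top w EE)"
proof (induction w)
  case Nil then show ?case using Estar_Espec[of lam] by (simp add: Espec_def)
next
  case (Cons i w) then show ?case by (simp add: ivd_Top0)
qed

lemma ivd_red: "reduced_word nn \<sigma> w \<Longrightarrow> ivd {0..<nn} dd (foldr Top w EE)"
  by (rule ivd_foldr) (simp add: reduced_word_def)

lemma two_asc:
  assumes IH: "\<And>v' w1 w2. incn v' < incn v \<Longrightarrow> mset v' = mset lam \<Longrightarrow> reduced_word nn (sig v') w1 \<Longrightarrow>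
                reduced_word nn (sig v') w2 \<Longrightarrow> foldr Top w1 EE = foldr Top w2 EE"
    and m: "mset v = mset lam" and ij: "i < j"
    and ai: "Suc i < nn" "v ! i < v ! Suc i" and aj: "Suc j < nn" "v ! j < v ! Suc j"
    and r1: "reduced_word nn (sig (swapc i v)) u1" and r2: "reduced_word nn (sig (swapc j v)) u2"
  shows "Top i (foldr Top u1 EE) = Top j (foldr Top u2 EE)"
proof -
  have lv: "length v = nn" by (rule mset_len[OF m])
  let ?v1 = "swapc i v" and ?v2 = "swapc j v"
  have m1: "mset ?v1 = mset lam" using mset_swapc[of i v] ai lv m by simp
  have m2: "mset ?v2 = mset lam" using mset_swapc[of j v] aj lv m by simp
  have l1: "length ?v1 = nn" "length ?v2 = nn" using lv by simp_all
  have d1: "incn ?v1 < incn v" using incn_swap[of i v] ai lv by simp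
  have d2: "incn ?v2 < incn v" using incn_swap[of j v] aj lv by simp
  show ?thesis
  proof (cases "j = Suc i")
    case False
    then have ij2: "Suc i < j" using ij by simp
    let ?nu = "swapc j ?v1"
    have nu2: "swapc i ?v2 = ?nu" using swapc_comm[OF ij2] aj lv by simp
    have mnu: "mset ?nu = mset lam" using mset_swapc[of j ?v1] aj l1 m1 by simp
    obtain u where u: "reduced_word nn (sig ?nu) u" using red_exists[OF mnu] by blast
    have a1: "?v1 ! j < ?v1 ! Suc j" using aj ai ij2 lv by (simp add: swapc_nth transpose_def)
    have a2: "?v2 ! i < ?v2 ! Suc i" using aj ai ij2 lv by (simp add: swapc_nth transpose_def)
    have r1': "reduced_word nn (sig ?v1) (j # u)" by (rule red_cons[OF m1 aj(1) a1 u])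
    have r2': "reduced_word nn (sig ?v2) (i # u)" using red_cons[OF m2 ai(1) a2] u nu2 by simp
    have e1: "foldr Top u1 EE = Top j (foldr Top u EE)" using IH[OF d1 m1 r1 r1'] by simp
    have e2: "foldr Top u2 EE = Top i (foldr Top u EE)" using IH[OF d2 m2 r2 r2'] by simp
    show ?thesis using e1 e2 hecke_comm[OF ivd_red[OF u] ij2 aj(1)] by simp
  next
    case True
    have ii: "Suc (Suc i) < nn" using aj True by simp
    let ?v12 = "swapc (Suc i) ?v1" and ?v21 = "swapc i ?v2"
    let ?rho = "swapc i ?v12"
    have rho2: "swapc (Suc i) ?v21 = ?rho" using swapc_braid[of i v] ii lv True by simp
    have m12: "mset ?v12 = mset lam" using mset_swapc[of "Suc i" ?v1] ii l1 m1 by simp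
    have m21: "mset ?v21 = mset lam" using mset_swapc[of i ?v2] ai l1 m2 True by simp
    have mr: "mset ?rho = mset lam" using mset_swapc[of i ?v12] ai lv m12 by simp
    obtain u where u: "reduced_word nn (sig ?rho) u" using red_exists[OF mr] by blast
    have a1: "?v1 ! Suc i < ?v1 ! Suc (Suc i)" using aj ai True lv by (simp add: swapc_nth transpose_def)
    have a12: "?v12 ! i < ?v12 ! Suc i" using aj ai True lv by (simp add: swapc_nth transpose_def)
    have a2: "?v2 ! i < ?v2 ! Suc i" using aj ai True lv by (simp add: swapc_nth transpose_def)
    have a21: "?v21 ! Suc i < ?v21 ! Suc (Suc i)" using aj ai True lv by (simp add: swapc_nth transpose_def)
    have r12: "reduced_word nn (sig ?v12) (i # u)" by (rule red_cons[OF m12 ai(1) a12 u])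
    have r1': "reduced_word nn (sig ?v1) (Suc i # i # u)" by (rule red_cons[OF m1 ii a1 r12])
    have r21: "reduced_word nn (sig ?v21) (Suc i # u)" using red_cons[OF m21 ii a21] u rho2 by simp
    have r2': "reduced_word nn (sig ?v2) (i # Suc i # u)" using red_cons[OF m2 ai(1) a2 r21] True by simp
    have e1: "foldr Top u1 EE = Top (Suc i) (Top i (foldr Top u EE))" using IH[OF d1 m1 r1 r1'] by simp
    have e2: "foldr Top u2 EE = Top i (Top (Suc i) (foldr Top u EE))"
      using IH[OF d2 m2 r2] r2' True by simp
    show ?thesis using e1 e2 hecke_braid[OF ivd_red[OF u] ii] True by simp
  qed
qed

lemma red_indep:
  "mset v = mset lam \<Longrightarrow> reduced_word nn (sig v) w1 \<Longrightarrow> reduced_word nn (sig v) w2 \<Longrightarrow>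
     foldr Top w1 EE = foldr Top w2 EE"
proof (induction "incn v" arbitrary: v w1 w2 rule: less_induct)
  case less
  note m = less.prems(1)
  show ?case
  proof (cases w1)
    case Nil
    then have "perm_len nn (sig v) = 0" using less.prems(2) by (simp add: reduced_word_def perm_len_id)
    then have "w2 = []" using less.prems(3) by (simp add: reduced_word_def)
    then show ?thesis using Nil by simp
  next
    case (Cons i u1)
    show ?thesis
    proof (cases w2)
      case Nil
      then have "perm_len nn (sig v) = 0" using less.prems(3) by (simp add: reduced_word_def perm_len_id)
      then show ?thesis using less.prems(2) Cons by (simp add: reduced_word_def)
    next
      case Cons2: (Cons j u2)
      have h1: "Suc i < nn" "v ! i < v ! Suc i" "reduced_word nn (sig (swapc i v)) u1"
        using red_head[OF m, of i u1] less.prems(2) Cons by auto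
      have h2: "Suc j < nn" "v ! j < v ! Suc j" "reduced_word nn (sig (swapc j v)) u2"
        using red_head[OF m, of j u2] less.prems(3) Cons2 by auto
      have IH: "\<And>v' w1 w2. incn v' < incn v \<Longrightarrow> mset v' = mset lam \<Longrightarrow> reduced_word nn (sig v') w1 \<Longrightarrow>
                reduced_word nn (sig v') w2 \<Longrightarrow> foldr Top w1 EE = foldr Top w2 EE"
        using less.hyps by blast
      have lv: "length v = nn" by (rule mset_len[OF m])
      consider "i = j" | "i < j" | "j < i" by linarith
      then show ?thesis
      proof cases
        case 1
        have d: "incn (swapc i v) < incn v" using incn_swap[of i v] h1 lv by simp
        have "mset (swapc i v) = mset lam" using mset_swapc[of i v] h1 lv m by simp
        then show ?thesis using IH[OF d _ h1(3)] h2(3) 1 Cons Cons2 by simp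
      next
        case 2
        show ?thesis using two_asc[OF IH m 2 h1(1,2) h2(1,2) h1(3) h2(3)] Cons Cons2 by simp
      next
        case 3
        show ?thesis using two_asc[OF IH m 3 h2(1,2) h1(1,2) h2(3) h1(3)] Cons Cons2 by simp
      qed
    qed
  qed
qed

lemma fstar_red: "mset v = mset lam \<Longrightarrow> reduced_word nn (sig v) w \<Longrightarrow> fstar lam v = foldr Top w EE"
proof -
  assume m: "mset v = mset lam" and r: "reduced_word nn (sig v) w"
  have "reduced_word nn (sig v) (SOME w. reduced_word nn (sig v) w)"
    using red_exists[OF m] by (rule someI_ex)
  then show ?thesis
    unfolding fstar_def Tperm_def using red_indep[OF m _ r] by simp
qed

lemma ivd_fstar: "mset v = mset lam \<Longrightarrow> ivd {0..<nn} dd (fstar lam v)"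
  using red_exists fstar_red ivd_red by metis

lemma fstar_asc:
  assumes m: "mset v = mset lam" and j: "Suc j < nn" and a: "v ! j < v ! Suc j"
  shows "fstar lam v = Top j (fstar lam (swapc j v))"
proof -
  have lv: "length v = nn" by (rule mset_len[OF m])
  have m2: "mset (swapc j v) = mset lam" using mset_swapc[of j v] j lv m by simp
  obtain u where u: "reduced_word nn (sig (swapc j v)) u" using red_exists[OF m2] by blast
  have "reduced_word nn (sig v) (j # u)" by (rule red_cons[OF m j a u])
  then show ?thesis using fstar_red[OF m] fstar_red[OF m2 u] by simp
qed

lemma fstar_lam: "fstar lam lam = EE"
  using fstar_red[of lam "[]"] by (simp add: reduced_word_def sig_lam perm_len_id)

lemma fstar_eq_case:
  "mset v = mset lam \<Longrightarrow> Suc i < nn \<Longrightarrow> v ! i = v ! Suc i \<Longrightarrow> Top i (fstar lam v) = mconst tt * fstar lam v"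
proof (induction "incn v" arbitrary: v i rule: less_induct)
  case less
  note m = less.prems(1) and i = less.prems(2) and eq = less.prems(3)
  have lv: "length v = nn" by (rule mset_len[OF m])
  show ?case
  proof (cases "\<exists>j. Suc j < length v \<and> v ! j < v ! Suc j")
    case False
    then have "sorted_wrt (\<ge>) v" by (intro no_ascent_sorted) auto
    then have vl: "v = lam" using sorted_ge_eq[OF m _ srt] by simp
    show ?thesis using Top_Estar_eq[of i lam] i eq vl fstar_lam by simp
  next
    case True
    then obtain j where j: "Suc j < nn" "v ! j < v ! Suc j" using lv by auto
    let ?v1 = "swapc j v"
    have m1: "mset ?v1 = mset lam" using mset_swapc[of j v] j lv m by simp
    have d1: "incn ?v1 < incn v" using incn_swap[of j v] j lv by simp
    have f1: "fstar lam v = Top j (fstar lam ?v1)" by (rule fstar_asc[OF m j])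
    have X1: "ivd {0..<nn} dd (fstar lam ?v1)" by (rule ivd_fstar[OF m1])
    have ji: "j \<noteq> i" using j eq by auto
    consider "Suc i < j" | "Suc j < i" | "j = Suc i" | "i = Suc j" using ji by linarith
    then show ?thesis
    proof cases
      case 1
      have "?v1 ! i = ?v1 ! Suc i" using eq 1 j lv by (simp add: swapc_nth transpose_def)
      then have "Top i (fstar lam ?v1) = mconst tt * fstar lam ?v1" using less.hyps[OF d1 m1 i] by simp
      then show ?thesis using f1 hecke_comm[OF X1 1 j(1)] by (simp add: Top_smult)
    next
      case 2
      have "?v1 ! i = ?v1 ! Suc i" using eq 2 j lv i by (simp add: swapc_nth transpose_def)
      then have "Top i (fstar lam ?v1) = mconst tt * fstar lam ?v1" using less.hyps[OF d1 m1 i] by simp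
      then show ?thesis using f1 hecke_comm[OF X1 2 i] by (simp add: Top_smult)
    next
      case 3
      \<comment> \<open>v = (a, a, b) at i, i+1, i+2 with a < b\<close>
      have a1: "?v1 ! i < ?v1 ! Suc i" using eq j 3 lv by (simp add: swapc_nth transpose_def)
      let ?rho = "swapc i ?v1"
      have mr: "mset ?rho = mset lam" using mset_swapc[of i ?v1] i lv m1 by simp
      have dr: "incn ?rho < incn v" using incn_swap[of i ?v1] a1 i lv d1 by simp
      have f2: "fstar lam ?v1 = Top i (fstar lam ?rho)" by (rule fstar_asc[OF m1 i a1])
      have er: "?rho ! Suc i = ?rho ! Suc (Suc i)" using eq j 3 lv by (simp add: swapc_nth transpose_def)
      have ih: "Top (Suc i) (fstar lam ?rho) = mconst tt * fstar lam ?rho"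
        using less.hyps[OF dr mr _ er] j 3 by simp
      have Xr: "ivd {0..<nn} dd (fstar lam ?rho)" by (rule ivd_fstar[OF mr])
      have ii: "Suc (Suc i) < nn" using j 3 by simp
      have "Top i (fstar lam v) = Top i (Top (Suc i) (Top i (fstar lam ?rho)))" using f1 f2 3 by simp
      also have "\<dots> = Top (Suc i) (Top i (Top (Suc i) (fstar lam ?rho)))" by (rule hecke_braid[OF Xr ii])
      also have "\<dots> = mconst tt * Top (Suc i) (Top i (fstar lam ?rho))" by (simp add: ih Top_smult)
      also have "\<dots> = mconst tt * fstar lam v" using f1 f2 3 by simp
      finally show ?thesis .
    next
      case 4
      \<comment> \<open>v = (a, b, b) at j, j+1, j+2 with a < b\<close>
      have jj: "Suc (Suc j) < nn" using i 4 by simp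
      have a1: "?v1 ! Suc j < ?v1 ! Suc (Suc j)" using eq j 4 lv jj by (simp add: swapc_nth transpose_def)
      let ?rho = "swapc (Suc j) ?v1"
      have mr: "mset ?rho = mset lam" using mset_swapc[of "Suc j" ?v1] jj lv m1 by simp
      have dr: "incn ?rho < incn v" using incn_swap[of "Suc j" ?v1] a1 jj lv d1 by simp
      have f2: "fstar lam ?v1 = Top (Suc j) (fstar lam ?rho)" by (rule fstar_asc[OF m1 jj a1])
      have er: "?rho ! j = ?rho ! Suc j" using eq j 4 lv jj by (simp add: swapc_nth transpose_def)
      have ih: "Top j (fstar lam ?rho) = mconst tt * fstar lam ?rho"
        using less.hyps[OF dr mr j(1) er] .
      have Xr: "ivd {0..<nn} dd (fstar lam ?rho)" by (rule ivd_fstar[OF mr])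
      have "Top i (fstar lam v) = Top (Suc j) (Top j (Top (Suc j) (fstar lam ?rho)))" using f1 f2 4 by simp
      also have "\<dots> = Top j (Top (Suc j) (Top j (fstar lam ?rho)))" by (rule hecke_braid[OF Xr jj, symmetric])
      also have "\<dots> = mconst tt * Top j (Top (Suc j) (fstar lam ?rho))" by (simp add: ih Top_smult)
      also have "\<dots> = mconst tt * fstar lam v" using f1 f2 by simp
      finally show ?thesis .
    qed
  qed
qed

end

theorem proposition2p10:
  fixes n :: nat and lam mu :: "nat list" and i :: nat
  assumes "length lam = n"
    and "sorted_wrt (\<ge>) lam"
    and "mset mu = mset lam"
    and "Suc i < n"
  shows "(mu ! i > mu ! Suc i \<longrightarrow> Top i (fstar lam mu) = fstar lam (swapc i mu))
    \<and> (mu ! i = mu ! Suc i \<longrightarrow> Top i (fstar lam mu) = mconst tt * fstar lam mu)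
    \<and> (mu ! i < mu ! Suc i \<longrightarrow>
         Top i (fstar lam mu) = mconst (tt - 1) * fstar lam mu + mconst tt * fstar lam (swapc i mu))"
proof -
  interpret part lam by unfold_locales (rule assms(2))
  have m: "mset mu = mset lam" by (rule assms(3))
  have i: "Suc i < length lam" using assms(1,4) by simp
  have lv: "length mu = length lam" by (rule mset_len[OF m])
  have m2: "mset (swapc i mu) = mset lam" using mset_swapc[of i mu] i lv m by simp
  have c1: "Top i (fstar lam mu) = fstar lam (swapc i mu)" if gt: "mu ! i > mu ! Suc i"
  proof -
    have a: "swapc i mu ! i < swapc i mu ! Suc i" using gt i lv by (simp add: swapc_nth_i swapc_nth_Si)
    have "fstar lam (swapc i mu) = Top i (fstar lam (swapc i (swapc i mu)))" by (rule fstar_asc[OF m2 i a])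
    then show ?thesis using swapc_swapc[of i mu] i lv by simp
  qed
  have c2: "Top i (fstar lam mu) = mconst tt * fstar lam mu" if "mu ! i = mu ! Suc i"
    by (rule fstar_eq_case[OF m i that])
  have c3: "Top i (fstar lam mu) = mconst (tt - 1) * fstar lam mu + mconst tt * fstar lam (swapc i mu)"
    if lt: "mu ! i < mu ! Suc i"
  proof -
    have f: "fstar lam mu = Top i (fstar lam (swapc i mu))" by (rule fstar_asc[OF m i lt])
    have "Top i (fstar lam mu) = Top i (Top i (fstar lam (swapc i mu)))" using f by simp
    also have "\<dots> = mconst (tt - 1) * Top i (fstar lam (swapc i mu)) + mconst tt * fstar lam (swapc i mu)"
      by (rule hecke_quad[OF ivd_fstar[OF m2] i])
    finally show ?thesis using f by simp
  qed
  show ?thesis using c1 c2 c3 by blast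
qed


end
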